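(* Let $L>0$ and let $P\in H^2(0,L)$ be real-valued with $P(x)\ge P^0>0$ for all $x\in[0,L]$, for some constant $P^0$. Let $$\mathcal H=\{z=(w,v,\xi,\psi): w\in H^2(0,L),\ v\in H^1(0,L),\ \xi=v(L),\ \psi=v(0)\},$$ a closed subspace of $H^2(0,L)\times H^1(0,L)\times\mathbb C\times\mathbb C$ (complex-valued functions), with natural inner product $\langle z_1,z_2\rangle=\langle w_1,w_2\rangle_{H^2}+\langle v_1,v_2\rangle_{H^1}+\xi_1\bar\xi_2+\psi_1\bar\psi_2$ and norm $\|\cdot\|$. For positive constants $\alpha_1,\alpha_2,\gamma$ define $$\begin{aligned}\langle z_1,z_2\rangle_{\mathcal H}:={}&\alpha_1\int_0^L\big[\gamma (Pw_1')'(P\bar w_2')'+Pw_1'\bar w_2'\big]\,dx+\alpha_1\gamma P(L)w_1'(L)\bar w_2'(L)+\alpha_2 w_1(0)\bar w_2(0)\\&+\alpha_1\int_0^L\big(\gamma P v_1'\bar v_2'+v_1\bar v_2\big)\,dx+\alpha_1P(L)\xi_1\bar\xi_2+\alpha_2\gamma\psi_1\bar\psi_2\\&+\tfrac12\big(\psi_1-2\alpha_1P(0)w_1'(0)+2\alpha_2w_1(0)\big)\big(\bar\psi_2-2\alpha_1P(0)\bar w_2'(0)+2\alpha_2\bar w_2(0)\big),\end{aligned}$$ and $\|z\|_{\mathcal H}=\langle z,z\rangle_{\mathcal H}^{1/2}$. Then $\|\cdot\|_{\mathcal H}$ is equivalent to $\|\cdot\|$ on $\mathcal H$, i.e. there are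 constants $c_1,c_2>0$ with $c_1\|z\|\le\|z\|_{\mathcal H}\le c_2\|z\|$ for all $z\in\mathcal H$.
   Context: Prime denotes the derivative in $x$; $H^n(0,L)$ are the standard Sobolev spaces; a bar denotes complex conjugation. *)

theory Defs
  imports "HOL-Analysis.Analysis"
begin

text \<open>Sobolev spaces on (0,L) for complex-valued functions, via the (absolutely continuous)
  representative: f is in H^1 iff f(x) = f(0) + int_0^x g for some g in L^2(0,L).
  Only the values on [0,L] matter.\<close>

definition has_wderiv :: "real \<Rightarrow> (real \<Rightarrow> complex) \<Rightarrow> (real \<Rightarrow> complex) \<Rightarrow> bool" where
  "has_wderiv L f g \<longleftrightarrow>
     g absolutely_integrable_on {0..L} \<and>
     (\<lambda>x. (cmod (g x))\<^sup>2) integrable_on {0..L} \<and>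
     (\<forall>x\<in>{0..L}. f x = f 0 + integral {0..x} g)"

definition H1 :: "real \<Rightarrow> (real \<Rightarrow> complex) \<Rightarrow> bool" where
  "H1 L f \<longleftrightarrow> (\<lambda>x. (cmod (f x))\<^sup>2) integrable_on {0..L} \<and> (\<exists>g. has_wderiv L f g)"

definition H2 :: "real \<Rightarrow> (real \<Rightarrow> complex) \<Rightarrow> bool" where
  "H2 L f \<longleftrightarrow> (\<lambda>x. (cmod (f x))\<^sup>2) integrable_on {0..L} \<and> (\<exists>g. has_wderiv L f g \<and> H1 L g)"

definition wd1 :: "real \<Rightarrow> (real \<Rightarrow> complex) \<Rightarrow> real \<Rightarrow> complex" where
  "wd1 L f = (SOME g. has_wderiv L f g)"

text \<open>Derivative of an H^2 function, chosen as its H^1 (continuous) representative,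
  so that point values such as w'(0), w'(L) are meaningful.\<close>
definition wd2 :: "real \<Rightarrow> (real \<Rightarrow> complex) \<Rightarrow> real \<Rightarrow> complex" where
  "wd2 L f = (SOME g. has_wderiv L f g \<and> H1 L g)"

definition H1norm2 :: "real \<Rightarrow> (real \<Rightarrow> complex) \<Rightarrow> real" where
  "H1norm2 L v = integral {0..L} (\<lambda>x. (cmod (v x))\<^sup>2 + (cmod (wd1 L v x))\<^sup>2)"

definition H2norm2 :: "real \<Rightarrow> (real \<Rightarrow> complex) \<Rightarrow> real" where
  "H2norm2 L w = integral {0..L}
     (\<lambda>x. (cmod (w x))\<^sup>2 + (cmod (wd2 L w x))\<^sup>2 + (cmod (wd1 L (wd2 L w) x))\<^sup>2)"

type_synonym state = "(real \<Rightarrow> complex) \<times> (real \<Rightarrow> complex) \<times> complex \<times> complex"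

definition Hsp :: "real \<Rightarrow> state set" where
  "Hsp L = {(w, v, \<xi>, \<psi>). H2 L w \<and> H1 L v \<and> \<xi> = v L \<and> \<psi> = v 0}"

definition stnorm :: "real \<Rightarrow> state \<Rightarrow> real" where
  "stnorm L z = (case z of (w, v, \<xi>, \<psi>) \<Rightarrow>
     sqrt (H2norm2 L w + H1norm2 L v + (cmod \<xi>)\<^sup>2 + (cmod \<psi>)\<^sup>2))"

definition ipH :: "real \<Rightarrow> (real \<Rightarrow> real) \<Rightarrow> real \<Rightarrow> real \<Rightarrow> real \<Rightarrow> state \<Rightarrow> state \<Rightarrow> complex" where
  "ipH L P a1 a2 \<gamma> z1 z2 = (case z1 of (w1, v1, \<xi>1, \<psi>1) \<Rightarrow> case z2 of (w2, v2, \<xi>2, \<psi>2) \<Rightarrow>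
      of_real a1 * integral {0..L} (\<lambda>x.
          of_real \<gamma> * wd1 L (\<lambda>y. of_real (P y) * wd2 L w1 y) x
                    * wd1 L (\<lambda>y. of_real (P y) * cnj (wd2 L w2 y)) x
          + of_real (P x) * wd2 L w1 x * cnj (wd2 L w2 x))
    + of_real a1 * of_real \<gamma> * of_real (P L) * wd2 L w1 L * cnj (wd2 L w2 L)
    + of_real a2 * w1 0 * cnj (w2 0)
    + of_real a1 * integral {0..L} (\<lambda>x.
          of_real \<gamma> * of_real (P x) * wd1 L v1 x * cnj (wd1 L v2 x) + v1 x * cnj (v2 x))
    + of_real a1 * of_real (P L) * \<xi>1 * cnj \<xi>2
    + of_real a2 * of_real \<gamma> * \<psi>1 * cnj \<psi>2
    + (1/2) * (\<psi>1 - 2 * of_real a1 * of_real (P 0) * wd2 L w1 0 + 2 * of_real a2 * w1 0)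
            * (cnj \<psi>2 - 2 * of_real a1 * of_real (P 0) * cnj (wd2 L w2 0) + 2 * of_real a2 * cnj (w2 0)))"

definition normH :: "real \<Rightarrow> (real \<Rightarrow> real) \<Rightarrow> real \<Rightarrow> real \<Rightarrow> real \<Rightarrow> state \<Rightarrow> real" where
  "normH L P a1 a2 \<gamma> z = sqrt (Re (ipH L P a1 a2 \<gamma> z z))"

end

theory Submission
  imports Defs
begin

lemma sigma_finite_lebesgue: "sigma_finite_measure (lebesgue :: real measure)"
proof
  show "\<exists>A. countable A \<and> A \<subseteq> sets (lebesgue::real measure) \<and> \<Union> A = space lebesgue \<and> (\<forall>a\<in>A. emeasure lebesgue a \<noteq> \<infinity>)"
  proof (intro exI[of _ "range (\<lambda>n::nat. {-real n..real n})"] conjI)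
    show "\<Union> (range (\<lambda>n::nat. {-real n..real n})) = space lebesgue"
    proof -
      have "x \<in> (\<Union>n::nat. {-real n..real n})" for x :: real
      proof -
        obtain n::nat where "\<bar>x\<bar> \<le> real n" using real_arch_simple by blast
        then have "x \<in> {-real n..real n}" by auto
        then show ?thesis by (rule UN_I[rotated]) simp
      qed
      then show ?thesis by auto
    qed
  qed auto
qed

interpretation leb2: pair_sigma_finite "lebesgue :: real measure" "lebesgue :: real measure"
  by (simp add: pair_sigma_finite_def sigma_finite_lebesgue)

lemma AE_leb_neq: "AE x in lebesgue. x \<noteq> (c::real)"
  by (simp add: AE_completion AE_lborel_singleton)

lemma id_leb: "(\<lambda>t::real. t) \<in> borel_measurable lebesgue"
  using id_borel_measurable_lebesgue by (simp add: id_def)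

lemma pred_leb[measurable]: "Measurable.pred lebesgue (\<lambda>t::real. t \<le> s)"
   "Measurable.pred lebesgue (\<lambda>t::real. s < t)" "Measurable.pred lebesgue (\<lambda>t::real. t < s)"
  unfolding pred_def
  by (rule borel_measurable_le[OF id_leb borel_measurable_const],
      rule borel_measurable_less[OF borel_measurable_const id_leb],
      rule borel_measurable_less[OF id_leb borel_measurable_const])

lemma prod_fubini:
  fixes g k :: "real \<Rightarrow> complex"
  assumes g: "g absolutely_integrable_on {a..b}" and k: "k absolutely_integrable_on {a..b}"
  shows "integral {a..b} g * integral {a..b} k =
     integral {a..b} (\<lambda>s. g s * integral {a..s} k) + integral {a..b} (\<lambda>t. integral {a..t} g * k t)"
    and "(\<lambda>s. g s * integral {a..s} k) absolutely_integrable_on {a..b}"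
    and "(\<lambda>t. integral {a..t} g * k t) absolutely_integrable_on {a..b}"
proof -
  define g' where "g' = (\<lambda>s. indicator {a..b} s *\<^sub>R g s)"
  define k' where "k' = (\<lambda>s. indicator {a..b} s *\<^sub>R k s)"
  have gi: "integrable lebesgue g'" using g by (simp add: set_integrable_def g'_def)
  have ki: "integrable lebesgue k'" using k by (simp add: set_integrable_def k'_def)
  have [measurable]: "g' \<in> borel_measurable lebesgue" "k' \<in> borel_measurable lebesgue"
    using gi ki by auto
  define F where "F p = g' (fst p) * k' (snd p)" for p
  have [measurable]: "F \<in> borel_measurable (lebesgue \<Otimes>\<^sub>M lebesgue)"
    unfolding F_def by measurable
  have intF: "integrable (lebesgue \<Otimes>\<^sub>M lebesgue) F"
  proof (rule leb2.Fubini_integrable)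
    have "(\<lambda>s. \<integral>t. norm (F (s, t)) \<partial>lebesgue) = (\<lambda>s. norm (g' s) * (\<integral>t. norm (k' t) \<partial>lebesgue))"
      by (simp add: F_def norm_mult)
    then show "integrable lebesgue (\<lambda>s. \<integral>t. norm (F (s, t)) \<partial>lebesgue)"
      using gi by (simp add: integrable_mult_left)
    show "AE s in lebesgue. integrable lebesgue (\<lambda>t. F (s, t))"
      using ki by (simp add: F_def)
  qed simp
  define f1 where "f1 s t = (if t \<le> s then g' s * k' t else 0)" for s t
  define f2 where "f2 s t = (if s < t then g' s * k' t else 0)" for s t
  have sf: "(\<lambda>p::real\<times>real. fst p) \<in> borel_measurable (lebesgue \<Otimes>\<^sub>M lebesgue)"
    using measurable_compose[OF measurable_fst id_borel_measurable_lebesgue] by (simp add: comp_def)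
  have ss: "(\<lambda>p::real\<times>real. snd p) \<in> borel_measurable (lebesgue \<Otimes>\<^sub>M lebesgue)"
    using measurable_compose[OF measurable_snd id_borel_measurable_lebesgue] by (simp add: comp_def)
  have [measurable]: "Measurable.pred (lebesgue \<Otimes>\<^sub>M lebesgue) (\<lambda>p::real\<times>real. snd p \<le> fst p)"
    unfolding pred_def by (rule borel_measurable_le[OF ss sf])
  have [measurable]: "Measurable.pred (lebesgue \<Otimes>\<^sub>M lebesgue) (\<lambda>p::real\<times>real. fst p < snd p)"
    unfolding pred_def by (rule borel_measurable_less[OF sf ss])
  have m1: "case_prod f1 \<in> borel_measurable (lebesgue \<Otimes>\<^sub>M lebesgue)"
  proof -
    have e: "case_prod f1 = (\<lambda>p. if snd p \<le> fst p then F p else 0)" by (auto simp: f1_def F_def fun_eq_iff)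
    have "(\<lambda>p. if snd p \<le> fst p then F p else 0) \<in> borel_measurable (lebesgue \<Otimes>\<^sub>M lebesgue)" by measurable
    then show ?thesis by (simp only: e)
  qed
  have m2: "case_prod f2 \<in> borel_measurable (lebesgue \<Otimes>\<^sub>M lebesgue)"
  proof -
    have e: "case_prod f2 = (\<lambda>p. if fst p < snd p then F p else 0)" by (auto simp: f2_def F_def fun_eq_iff)
    have "(\<lambda>p. if fst p < snd p then F p else 0) \<in> borel_measurable (lebesgue \<Otimes>\<^sub>M lebesgue)" by measurable
    then show ?thesis by (simp only: e)
  qed
  have int1: "integrable (lebesgue \<Otimes>\<^sub>M lebesgue) (case_prod f1)"
    by (rule Bochner_Integration.integrable_bound[OF intF m1]) (auto simp: f1_def F_def)
  have int2: "integrable (lebesgue \<Otimes>\<^sub>M lebesgue) (case_prod f2)"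
    by (rule Bochner_Integration.integrable_bound[OF intF m2]) (auto simp: f2_def F_def)
  have ik1: "integrable lebesgue (\<lambda>t. if t \<le> s then k' t else 0)" for s
    by (rule Bochner_Integration.integrable_bound[OF ki]) auto
  have ik2: "integrable lebesgue (\<lambda>t. if s < t then k' t else 0)" for s
    by (rule Bochner_Integration.integrable_bound[OF ki]) auto
  note ik = ik1 ik2
  have ig: "integrable lebesgue (\<lambda>t. if t < s then g' t else 0)" for s
    by (rule Bochner_Integration.integrable_bound[OF gi]; auto)
  have in1: "(\<integral>t. f1 s t \<partial>lebesgue) = g' s * (\<integral>t. (if t \<le> s then k' t else 0) \<partial>lebesgue)" for s
  proof -
    have "f1 s = (\<lambda>t. g' s * (if t \<le> s then k' t else 0))" by (auto simp: f1_def)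
    then show ?thesis by simp
  qed
  have in2: "(\<integral>t. f2 s t \<partial>lebesgue) = g' s * (\<integral>t. (if s < t then k' t else 0) \<partial>lebesgue)" for s
  proof -
    have "f2 s = (\<lambda>t. g' s * (if s < t then k' t else 0))" by (auto simp: f2_def)
    then show ?thesis by simp
  qed
  have in2': "(\<integral>s. f2 s t \<partial>lebesgue) = (\<integral>s. (if s < t then g' s else 0) \<partial>lebesgue) * k' t" for t
  proof -
    have "(\<lambda>s. f2 s t) = (\<lambda>s. (if s < t then g' s else 0) * k' t)" by (auto simp: f2_def)
    then show ?thesis by simp
  qed
  have sumk: "(\<integral>t. (if t \<le> s then k' t else 0) \<partial>lebesgue) + (\<integral>t. (if s < t then k' t else 0) \<partial>lebesgue)
       = (\<integral>t. k' t \<partial>lebesgue)" for s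
  proof -
    have "(\<integral>t. (if t \<le> s then k' t else 0) \<partial>lebesgue) + (\<integral>t. (if s < t then k' t else 0) \<partial>lebesgue)
       = (\<integral>t. (if t \<le> s then k' t else 0) + (if s < t then k' t else 0) \<partial>lebesgue)"
      using ik by (simp add: integral_add)
    also have "\<dots> = (\<integral>t. k' t \<partial>lebesgue)"
      by (rule Bochner_Integration.integral_cong) auto
    finally show ?thesis .
  qed
  have total: "(\<integral>s. (\<integral>t. f1 s t \<partial>lebesgue) \<partial>lebesgue) + (\<integral>t. (\<integral>s. f2 s t \<partial>lebesgue) \<partial>lebesgue)
     = (\<integral>s. g' s \<partial>lebesgue) * (\<integral>t. k' t \<partial>lebesgue)"
  proof -
    have "(\<integral>t. (\<integral>s. f2 s t \<partial>lebesgue) \<partial>lebesgue) = (\<integral>s. (\<integral>t. f2 s t \<partial>lebesgue) \<partial>lebesgue)"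
      by (rule leb2.Fubini_integral[OF int2])
    moreover have "(\<integral>s. (\<integral>t. f1 s t \<partial>lebesgue) \<partial>lebesgue) + (\<integral>s. (\<integral>t. f2 s t \<partial>lebesgue) \<partial>lebesgue)
       = (\<integral>s. (\<integral>t. f1 s t \<partial>lebesgue) + (\<integral>t. f2 s t \<partial>lebesgue) \<partial>lebesgue)"
      using leb2.integrable_fst[OF int1] leb2.integrable_fst[OF int2] by (simp add: integral_add)
    moreover have "\<dots> = (\<integral>s. g' s * (\<integral>t. k' t \<partial>lebesgue) \<partial>lebesgue)"
      by (rule Bochner_Integration.integral_cong) (auto simp: in1 in2 sumk distrib_left[symmetric])
    ultimately show ?thesis by simp
  qed
  have p1: "(\<integral>t. f1 s t \<partial>lebesgue) = indicator {a..b} s *\<^sub>R (g s * integral {a..s} k)" for s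
  proof (cases "s \<in> {a..b}")
    case True
    have "(\<integral>t. (if t \<le> s then k' t else 0) \<partial>lebesgue) = (\<integral>t. indicator {a..s} t *\<^sub>R k t \<partial>lebesgue)"
      by (rule Bochner_Integration.integral_cong) (use True in \<open>auto simp: k'_def indicator_def\<close>)
    also have "\<dots> = integral {a..s} k"
      using set_lebesgue_integral_eq_integral(2)[OF set_integrable_subset[OF k, of "{a..s}"]] True
      by (simp add: set_lebesgue_integral_def)
    finally show ?thesis using True by (simp add: in1 g'_def)
  qed (simp add: in1 g'_def)
  have p2: "(\<integral>s. f2 s t \<partial>lebesgue) = indicator {a..b} t *\<^sub>R (integral {a..t} g * k t)" for t
  proof (cases "t \<in> {a..b}")
    case True
    have "(\<integral>s. (if s < t then g' s else 0) \<partial>lebesgue) = (\<integral>s. indicator {a..t} s *\<^sub>R g s \<partial>lebesgue)"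
    proof -
      have git: "integrable lebesgue (\<lambda>s. indicator {a..t} s *\<^sub>R g s)"
        using set_integrable_subset[OF g, of "{a..t}"] True by (auto simp: set_integrable_def)
      show ?thesis
        apply (rule integral_cong_AE[OF _ borel_measurable_integrable[OF git]])
        subgoal by measurable
        using True AE_leb_neq[of t] by (auto simp: g'_def indicator_def elim!: eventually_mono)
    qed
    also have "\<dots> = integral {a..t} g"
      using set_lebesgue_integral_eq_integral(2)[OF set_integrable_subset[OF g, of "{a..t}"]] True
      by (simp add: set_lebesgue_integral_def)
    finally show ?thesis using True by (simp add: in2' k'_def)
  qed (simp add: in2' k'_def)
  have s1: "(\<lambda>s. g s * integral {a..s} k) absolutely_integrable_on {a..b}"
    using leb2.integrable_fst[OF int1] by (simp add: p1 set_integrable_def)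
  have s2: "(\<lambda>t. integral {a..t} g * k t) absolutely_integrable_on {a..b}"
    using leb2.integrable_snd[OF int2] by (simp add: p2 set_integrable_def)
  show "(\<lambda>s. g s * integral {a..s} k) absolutely_integrable_on {a..b}" by (fact s1)
  show "(\<lambda>t. integral {a..t} g * k t) absolutely_integrable_on {a..b}" by (fact s2)
  have e1: "(\<integral>s. (\<integral>t. f1 s t \<partial>lebesgue) \<partial>lebesgue) = integral {a..b} (\<lambda>s. g s * integral {a..s} k)"
    using set_lebesgue_integral_eq_integral(2)[OF s1] by (simp add: p1 set_lebesgue_integral_def)
  have e2: "(\<integral>t. (\<integral>s. f2 s t \<partial>lebesgue) \<partial>lebesgue) = integral {a..b} (\<lambda>t. integral {a..t} g * k t)"
    using set_lebesgue_integral_eq_integral(2)[OF s2] by (simp add: p2 set_lebesgue_integral_def)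
  have e3: "(\<integral>s. g' s \<partial>lebesgue) = integral {a..b} g"
    using set_lebesgue_integral_eq_integral(2)[OF g] by (simp add: g'_def set_lebesgue_integral_def)
  have e4: "(\<integral>s. k' s \<partial>lebesgue) = integral {a..b} k"
    using set_lebesgue_integral_eq_integral(2)[OF k] by (simp add: k'_def set_lebesgue_integral_def)
  show "integral {a..b} g * integral {a..b} k =
     integral {a..b} (\<lambda>s. g s * integral {a..s} k) + integral {a..b} (\<lambda>t. integral {a..t} g * k t)"
    using total e1 e2 e3 e4 by simp
qed

lemma hw_int:
  assumes "has_wderiv L f g"
  shows "g integrable_on {0..L}" "(\<lambda>x. norm (g x)) integrable_on {0..L}"
proof -
  have "g absolutely_integrable_on {0..L}" using assms unfolding has_wderiv_def by blast
  then show "g integrable_on {0..L}" "(\<lambda>x. norm (g x)) integrable_on {0..L}"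
    using absolutely_integrable_on_def by blast+
qed

lemma hw_eq: "has_wderiv L f g \<Longrightarrow> x \<in> {0..L} \<Longrightarrow> f x = f 0 + integral {0..x} g"
  unfolding has_wderiv_def by blast

lemma hw_cont:
  assumes "has_wderiv L f g"
  shows "continuous_on {0..L} f"
proof -
  have "continuous_on {0..L} (\<lambda>x. f 0 + integral {0..x} g)"
    using indefinite_integral_continuous_1[OF hw_int(1)[OF assms]] by (intro continuous_intros)
  then show ?thesis
    by (rule continuous_on_eq) (simp add: hw_eq[OF assms, symmetric])
qed

lemma hw_diff:
  assumes "has_wderiv L f g" "y \<le> x" "0 \<le> y" "x \<le> L"
  shows "f x - f y = integral {y..x} g"
proof -
  have i: "g integrable_on {0..x}" using hw_int(1)[OF assms(1)] integrable_subinterval_real assms by fastforce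
  have "integral {0..y} g + integral {y..x} g = integral {0..x} g"
    by (rule Henstock_Kurzweil_Integration.integral_combine) (use assms i in auto)
  then have c: "integral {0..x} g = integral {0..y} g + integral {y..x} g" by simp
  have "f x - f y = (f 0 + integral {0..x} g) - (f 0 + integral {0..y} g)"
    using hw_eq[OF assms(1), of x] hw_eq[OF assms(1), of y] assms by simp
  also have "\<dots> = integral {y..x} g" unfolding c by simp
  finally show ?thesis .
qed

lemma hw_osc:
  assumes "has_wderiv L f g" "x \<in> {0..L}" "y \<in> {0..L}"
  shows "norm (f x - f y) \<le> integral {0..L} (\<lambda>t. norm (g t))"
proof -
  have *: "norm (f x - f y) \<le> integral {0..L} (\<lambda>t. norm (g t))" if "y \<le> x" "x \<in> {0..L}" "y \<in> {0..L}" for x y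
  proof -
    have "norm (f x - f y) = norm (integral {y..x} g)" using hw_diff[OF assms(1) that(1)] that by auto
    also have "\<dots> \<le> integral {y..x} (\<lambda>t. norm (g t))"
      by (rule integral_norm_bound_integral)
         (use hw_int[OF assms(1)] integrable_subinterval_real that in \<open>auto intro: integrable_subinterval_real\<close>)
    also have "\<dots> \<le> integral {0..L} (\<lambda>t. norm (g t))"
      by (rule integral_subset_le) (use hw_int[OF assms(1)] that in \<open>auto intro: integrable_subinterval_real\<close>)
    finally show ?thesis .
  qed
  show ?thesis
  proof (cases "y \<le> x")
    case True then show ?thesis using * assms by blast
  next
    case False
    have "norm (f y - f x) \<le> integral {0..L} (\<lambda>t. norm (g t))" by (rule *) (use False assms in auto)
    then show ?thesis by (simp add: norm_minus_commute)
  qed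
qed

lemma cs_int:
  fixes g :: "real \<Rightarrow> 'a::euclidean_space"
  assumes "(\<lambda>t. norm (g t)) integrable_on {0..L}" "(\<lambda>t. (norm (g t))\<^sup>2) integrable_on {0..L}" "0 \<le> L"
  shows "(integral {0..L} (\<lambda>t. norm (g t)))\<^sup>2 \<le> L * integral {0..L} (\<lambda>t. (norm (g t))\<^sup>2)"
proof -
  define I where "I = integral {0..L} (\<lambda>t. norm (g t))"
  define G where "G = integral {0..L} (\<lambda>t. (norm (g t))\<^sup>2)"
  have I0: "I \<ge> 0" unfolding I_def by (rule integral_nonneg) (use assms in auto)
  have G0: "G \<ge> 0" unfolding G_def by (rule integral_nonneg) (use assms in auto)
  show ?thesis
  proof (cases "I = 0")
    case True then show ?thesis using G0 assms by (simp add: I_def[symmetric] G_def[symmetric])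
  next
    case False
    then have Ip: "I > 0" using I0 by auto
    have Lp: "L > 0"
    proof (rule ccontr)
      assume "\<not> L > 0" then have "L = 0" using assms by auto
      then have "I = 0" by (simp add: I_def)
      with Ip show False by simp
    qed
    define e where "e = I / L"
    have ep: "e > 0" using Ip Lp by (simp add: e_def)
    have pt: "norm (g t) \<le> e/2 + (1/(2*e)) * (norm (g t))\<^sup>2" for t
    proof -
      have "0 \<le> (e - norm (g t))\<^sup>2" by simp
      then have "2 * e * norm (g t) \<le> e\<^sup>2 + (norm (g t))\<^sup>2" by (simp add: power2_eq_square algebra_simps)
      then show ?thesis using ep by (simp add: field_simps power2_eq_square)
    qed
    have ii: "(\<lambda>t. e/2 + (1/(2*e)) *\<^sub>R (norm (g t))\<^sup>2) integrable_on {0..L}"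
      using integrable_add[OF integrable_const_ivl[of "e/2" 0 L] integrable_cmul[OF assms(2), of "1/(2*e)"]] by simp
    have "I \<le> integral {0..L} (\<lambda>t. e/2 + (1/(2*e)) *\<^sub>R (norm (g t))\<^sup>2)"
      unfolding I_def by (rule integral_le[OF assms(1) ii]) (use pt in auto)
    also have "\<dots> = integral {0..L} (\<lambda>t. e/2) + integral {0..L} (\<lambda>t. (1/(2*e)) *\<^sub>R (norm (g t))\<^sup>2)"
      by (rule integral_add[OF integrable_const_ivl integrable_cmul[OF assms(2)]])
    also have "\<dots> = L * (e/2) + (1/(2*e)) * G"
      using assms(3) unfolding integral_cmul by (simp add: G_def)
    also have "\<dots> = I/2 + L * G / (2 * I)" using Lp Ip by (simp add: e_def field_simps)
    finally have "I \<le> I/2 + L * G / (2 * I)" .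
    then have "I * I \<le> L * G" using Ip by (simp add: field_simps)
    then have "I\<^sup>2 \<le> L * G" by (simp add: power2_eq_square)
    then show ?thesis unfolding I_def G_def .
  qed
qed

lemma integral_cmult_c:
  fixes c :: "'a::{real_normed_algebra,banach}"
  shows "f integrable_on S \<Longrightarrow> integral S (\<lambda>x. c * f x) = c * integral S f"
  by (rule integral_unique[OF has_integral_mult_right[OF integrable_integral]])

lemma hw_unique:
  assumes "has_wderiv L f g1" "has_wderiv L f g2"
  shows "\<exists>N. negligible N \<and> (\<forall>x\<in>{0..L} - N. g1 x = g2 x)"
proof -
  define d where "d x = (if x \<in> {0..L} then g1 x - g2 x else 0)" for x
  have di: "(\<lambda>x. g1 x - g2 x) integrable_on {0..L}"
    using hw_int(1)[OF assms(1)] hw_int(1)[OF assms(2)] by (rule integrable_diff)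
  have "d integrable_on UNIV" using di unfolding d_def
    by (rule Henstock_Kurzweil_Integration.integrable_restrict_UNIV[THEN iffD2])
  then have dab: "d integrable_on cbox a b" for a b using integrable_on_subcbox by blast
  obtain N where N: "negligible N" and lim: "\<And>x e. x \<notin> N \<Longrightarrow> 0 < e \<Longrightarrow> \<exists>\<delta>>0. \<forall>h. 0 < h \<and> h < \<delta> \<longrightarrow>
       norm (integral (cbox x (x + h *\<^sub>R One)) d /\<^sub>R h ^ DIM(real) - d x) < e"
    using integrable_ccontinuous_explicit[of d] dab by blast
  have zero: "integral {x..y} d = 0" if "0 \<le> x" "x \<le> y" "y \<le> L" for x y
  proof -
    have i1: "g1 integrable_on {x..y}" "g2 integrable_on {x..y}"
      using hw_int(1)[OF assms(1)] hw_int(1)[OF assms(2)] that by (auto intro: integrable_subinterval_real)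
    have "integral {x..y} d = integral {x..y} (\<lambda>t. g1 t - g2 t)"
      by (rule Henstock_Kurzweil_Integration.integral_cong) (use that in \<open>auto simp: d_def\<close>)
    also have "\<dots> = integral {x..y} g1 - integral {x..y} g2" by (rule integral_diff[OF i1])
    also have "\<dots> = (f y - f x) - (f y - f x)"
      using hw_diff[OF assms(1), of x y] hw_diff[OF assms(2), of x y] that by simp
    finally show ?thesis by simp
  qed
  show ?thesis
  proof (intro exI[of _ "N \<union> {L}"] conjI ballI)
    show "negligible (N \<union> {L})" using N by (simp add: negligible_Un)
    fix x assume x: "x \<in> {0..L} - (N \<union> {L})"
    then have xL: "0 \<le> x" "x < L" "x \<notin> N" by auto
    have lt: "norm (d x) < e" if ep: "e > 0" for e
    proof -
      obtain \<delta> where \<delta>: "\<delta> > 0" and H: "\<forall>h. 0 < h \<and> h < \<delta> \<longrightarrow>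
         norm (integral (cbox x (x + h *\<^sub>R One)) d /\<^sub>R h ^ DIM(real) - d x) < e"
        using lim[OF xL(3) ep] by blast
      define m0 where "m0 = min \<delta> (L - x)"
      define h where "h = m0 / 2"
      have m: "m0 \<le> L - x" "m0 \<le> \<delta>" "m0 > 0" using \<delta> xL by (auto simp: m0_def)
      have h1: "0 < h" using m unfolding h_def by linarith
      have h2: "h < \<delta>" using m \<delta> unfolding h_def by linarith
      have h3: "x + h \<le> L" using m unfolding h_def by linarith
      note h = h1 h2 h3
      have i0: "integral (cbox x (x + h *\<^sub>R One)) d = 0" using zero[of x "x+h"] h xL by simp
      have "norm (integral (cbox x (x + h *\<^sub>R One)) d /\<^sub>R h ^ DIM(real) - d x) < e" using H h1 h2 by blast
      then show ?thesis unfolding i0 by simp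
    qed
    have "d x = 0"
    proof (rule ccontr)
      assume "d x \<noteq> 0"
      then have "norm (d x) > 0" by simp
      from lt[OF this] show False by simp
    qed
    then show "g1 x = g2 x" using x by (simp add: d_def)
  qed
qed

lemma hw_cnj:
  assumes "has_wderiv L f g"
  shows "has_wderiv L (\<lambda>x. cnj (f x)) (\<lambda>x. cnj (g x))"
proof -
  have a: "g absolutely_integrable_on {0..L}" "(\<lambda>x. (cmod (g x))\<^sup>2) integrable_on {0..L}"
    "\<forall>x\<in>{0..L}. f x = f 0 + integral {0..x} g"
    using assms unfolding has_wderiv_def by blast+
  have "(\<lambda>x. cnj (g x)) absolutely_integrable_on {0..L}"
  proof -
    have eq: "(\<lambda>x. indicator {0..L} x *\<^sub>R cnj (g x)) = (\<lambda>x. cnj (indicator {0..L} x *\<^sub>R g x))"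
      by (auto simp: fun_eq_iff indicator_def)
    have "integrable lebesgue (\<lambda>x. cnj (indicator {0..L} x *\<^sub>R g x))"
      using a(1) unfolding set_integrable_def by (rule integrable_cnj)
    then show ?thesis unfolding set_integrable_def eq .
  qed
  moreover have "(\<lambda>x. (cmod (cnj (g x)))\<^sup>2) integrable_on {0..L}" using a(2) by simp
  moreover have "\<forall>x\<in>{0..L}. cnj (f x) = cnj (f 0) + integral {0..x} (\<lambda>x. cnj (g x))"
  proof
    fix x assume "x \<in> {0..L}"
    then have "f x = f 0 + integral {0..x} g" using a(3) by blast
    then show "cnj (f x) = cnj (f 0) + integral {0..x} (\<lambda>x. cnj (g x))" by (simp add: integral_cnj[symmetric])
  qed
  ultimately show ?thesis unfolding has_wderiv_def by blast
qed

lemma bounded_cont: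
  fixes f :: "real \<Rightarrow> 'a::real_normed_vector"
  assumes "continuous_on {a..b} f"
  obtains M where "M > 0" "\<And>x. x \<in> {a..b} \<Longrightarrow> norm (f x) \<le> M"
proof -
  have "bounded (f ` {a..b})" by (rule compact_imp_bounded[OF compact_continuous_image[OF assms compact_Icc]])
  then show ?thesis using that by (metis bounded_pos imageI)
qed

lemma norm_sq_add: "(norm ((a::'a::real_normed_vector) + b))\<^sup>2 \<le> 2 * (norm a)\<^sup>2 + 2 * (norm b)\<^sup>2"
proof -
  have "norm (a + b) \<le> norm a + norm b" by (rule norm_triangle_ineq)
  then have "(norm (a+b))\<^sup>2 \<le> (norm a + norm b)\<^sup>2" by (simp add: power_mono)
  also have "\<dots> \<le> 2 * (norm a)\<^sup>2 + 2 * (norm b)\<^sup>2"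
  proof -
    have "0 \<le> (norm a - norm b)\<^sup>2" by simp
    then show ?thesis by (simp add: power2_eq_square algebra_simps)
  qed
  finally show ?thesis .
qed

lemma hw_mult:
  assumes f: "has_wderiv L f g" and h: "has_wderiv L h k"
  shows "has_wderiv L (\<lambda>x. f x * h x) (\<lambda>x. g x * h x + f x * k x)"
proof -
  have ga: "g absolutely_integrable_on {0..L}" and g2: "(\<lambda>x. (cmod (g x))\<^sup>2) integrable_on {0..L}"
    using f unfolding has_wderiv_def by blast+
  have ka: "k absolutely_integrable_on {0..L}" and k2: "(\<lambda>x. (cmod (k x))\<^sup>2) integrable_on {0..L}"
    using h unfolding has_wderiv_def by blast+
  have cf: "continuous_on {0..L} f" by (rule hw_cont[OF f])
  have ch: "continuous_on {0..L} h" by (rule hw_cont[OF h])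
  obtain Mf where Mf: "Mf > 0" "\<And>x. x \<in> {0..L} \<Longrightarrow> norm (f x) \<le> Mf" using bounded_cont[OF cf] by blast
  obtain Mh where Mh: "Mh > 0" "\<And>x. x \<in> {0..L} \<Longrightarrow> norm (h x) \<le> Mh" using bounded_cont[OF ch] by blast
  have bf: "bounded (f ` {0..L})" by (rule compact_imp_bounded[OF compact_continuous_image[OF cf compact_Icc]])
  have bh: "bounded (h ` {0..L})" by (rule compact_imp_bounded[OF compact_continuous_image[OF ch compact_Icc]])
  have mf: "f \<in> borel_measurable (lebesgue_on {0..L})" by (rule continuous_imp_measurable_on_sets_lebesgue[OF cf]) simp
  have mh: "h \<in> borel_measurable (lebesgue_on {0..L})" by (rule continuous_imp_measurable_on_sets_lebesgue[OF ch]) simp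
  have a1: "(\<lambda>x. h x * g x) absolutely_integrable_on {0..L}"
    by (rule absolutely_integrable_bounded_measurable_product[OF bilinear_times mh _ bh ga]) simp
  have a2: "(\<lambda>x. f x * k x) absolutely_integrable_on {0..L}"
    by (rule absolutely_integrable_bounded_measurable_product[OF bilinear_times mf _ bf ka]) simp
  have aa: "(\<lambda>x. g x * h x + f x * k x) absolutely_integrable_on {0..L}"
  proof -
    have aa0: "(\<lambda>x. h x * g x + f x * k x) absolutely_integrable_on {0..L}" by (rule set_integral_add(1)[OF a1 a2])
    have eqf: "(\<lambda>x. g x * h x + f x * k x) = (\<lambda>x. h x * g x + f x * k x)" by (rule ext) (simp add: mult.commute)
    show ?thesis unfolding eqf by (rule aa0)
  qed
  have msum: "(\<lambda>x. g x * h x + f x * k x) \<in> borel_measurable (lebesgue_on {0..L})"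
    using absolutely_integrable_measurable[of "{0..L}" "\<lambda>x. g x * h x + f x * k x"] aa by simp
  have m2: "(\<lambda>x. (cmod (g x * h x + f x * k x))\<^sup>2) \<in> borel_measurable (lebesgue_on {0..L})"
    using msum by measurable
  have sq: "(\<lambda>x. (cmod (g x * h x + f x * k x))\<^sup>2) integrable_on {0..L}"
  proof (rule measurable_bounded_by_integrable_imp_integrable_real[OF m2])
    show "(\<lambda>x. 2 * Mh\<^sup>2 * (cmod (g x))\<^sup>2 + 2 * Mf\<^sup>2 * (cmod (k x))\<^sup>2) integrable_on {0..L}"
      using integrable_add[OF integrable_cmul[OF g2, of "2 * Mh\<^sup>2"] integrable_cmul[OF k2, of "2 * Mf\<^sup>2"]] by simp
    fix x assume x: "x \<in> {0..L}"
    have "(cmod (g x * h x + f x * k x))\<^sup>2 \<le> 2 * (cmod (g x * h x))\<^sup>2 + 2 * (cmod (f x * k x))\<^sup>2"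
      by (rule norm_sq_add)
    also have "\<dots> \<le> 2 * Mh\<^sup>2 * (cmod (g x))\<^sup>2 + 2 * Mf\<^sup>2 * (cmod (k x))\<^sup>2"
    proof -
      have "cmod (g x * h x) \<le> cmod (g x) * Mh" using Mh(2)[OF x] by (simp add: norm_mult mult_left_mono)
      then have "(cmod (g x * h x))\<^sup>2 \<le> (cmod (g x) * Mh)\<^sup>2" by (simp add: power_mono)
      moreover have "cmod (f x * k x) \<le> Mf * cmod (k x)" using Mf(2)[OF x] by (simp add: norm_mult mult_right_mono)
      then have "(cmod (f x * k x))\<^sup>2 \<le> (Mf * cmod (k x))\<^sup>2" by (simp add: power_mono)
      ultimately show ?thesis by (simp add: power_mult_distrib algebra_simps)
    qed
    finally show "\<bar>(cmod (g x * h x + f x * k x))\<^sup>2\<bar> \<le> 2 * Mh\<^sup>2 * (cmod (g x))\<^sup>2 + 2 * Mf\<^sup>2 * (cmod (k x))\<^sup>2"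
      by simp
  qed simp
  have formula: "f x * h x = f 0 * h 0 + integral {0..x} (\<lambda>s. g s * h s + f s * k s)" if x: "x \<in> {0..L}" for x
  proof -
    define G where "G s = integral {0..s} g" for s
    define K where "K s = integral {0..s} k" for s
    have gx: "g absolutely_integrable_on {0..x}" using set_integrable_subset[OF ga, of "{0..x}"] x by auto
    have kx: "k absolutely_integrable_on {0..x}" using set_integrable_subset[OF ka, of "{0..x}"] x by auto
    note pf = prod_fubini[OF gx kx]
    have gi: "g integrable_on {0..x}" "k integrable_on {0..x}"
      using gx kx by (auto simp: absolutely_integrable_on_def)
    have i3: "(\<lambda>s. G s * k s) integrable_on {0..x}"
      using pf(3) by (auto simp: absolutely_integrable_on_def G_def K_def)
    have i3': "(\<lambda>s. g s * K s) integrable_on {0..x}"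
      using pf(2) by (auto simp: absolutely_integrable_on_def K_def)
    have "integral {0..x} (\<lambda>s. g s * h s + f s * k s)
        = integral {0..x} (\<lambda>s. (h 0 * g s + g s * K s) + (f 0 * k s + G s * k s))"
    proof (rule Henstock_Kurzweil_Integration.integral_cong)
      fix s assume s: "s \<in> {0..x}"
      then have sL: "s \<in> {0..L}" using x by auto
      have e1: "h s = h 0 + K s" using hw_eq[OF h sL] by (simp add: K_def)
      have e2: "f s = f 0 + G s" using hw_eq[OF f sL] by (simp add: G_def)
      show "g s * h s + f s * k s = (h 0 * g s + g s * K s) + (f 0 * k s + G s * k s)"
        unfolding e1 e2 by (simp add: algebra_simps)
    qed
    also have "\<dots> = (h 0 * G x + integral {0..x} (\<lambda>s. g s * K s)) + (f 0 * K x + integral {0..x} (\<lambda>s. G s * k s))"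
      using gi i3 i3'
      using gi i3 i3' by (simp add: integral_add integrable_add integrable_on_mult_right integral_cmult_c G_def K_def)
    also have "\<dots> = h 0 * G x + f 0 * K x + G x * K x"
      using pf(1) by (simp add: G_def K_def)
    also have "\<dots> = f x * h x - f 0 * h 0"
      using hw_eq[OF f x] hw_eq[OF h x] by (simp add: G_def K_def algebra_simps)
    finally show ?thesis by simp
  qed
  show ?thesis unfolding has_wderiv_def using aa sq formula by blast
qed

lemma sq_le_2: "(a::real) \<le> b + c \<Longrightarrow> 0 \<le> a \<Longrightarrow> a\<^sup>2 \<le> 2 * b\<^sup>2 + 2 * c\<^sup>2"
proof -
  assume "a \<le> b + c" "0 \<le> a"
  then have "a\<^sup>2 \<le> (b + c)\<^sup>2" by (simp add: power_mono)
  also have "\<dots> \<le> 2 * b\<^sup>2 + 2 * c\<^sup>2"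
  proof -
    have "0 \<le> (b - c)\<^sup>2" by simp
    then show ?thesis by (simp add: power2_eq_square algebra_simps)
  qed
  finally show ?thesis .
qed

lemma hw_sq: "has_wderiv L f g \<Longrightarrow> (\<lambda>x. (cmod (g x))\<^sup>2) integrable_on {0..L}"
  unfolding has_wderiv_def by blast

lemma pt_bound_y:
  assumes f: "has_wderiv L f g" and L: "0 \<le> L" and x: "x \<in> {0..L}" and y: "y \<in> {0..L}"
  shows "(cmod (f x))\<^sup>2 \<le> 2 * (cmod (f y))\<^sup>2 + 2 * (L * integral {0..L} (\<lambda>t. (cmod (g t))\<^sup>2))"
proof -
  have cs: "(integral {0..L} (\<lambda>t. norm (g t)))\<^sup>2 \<le> L * integral {0..L} (\<lambda>t. (norm (g t))\<^sup>2)"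
    by (rule cs_int[OF hw_int(2)[OF f] hw_sq[OF f] L])
  have "norm (f x - f y) \<le> integral {0..L} (\<lambda>t. norm (g t))" by (rule hw_osc[OF f x y])
  then have "cmod (f x) \<le> cmod (f y) + integral {0..L} (\<lambda>t. norm (g t))"
    using norm_triangle_ineq2[of "f x" "f y"] by linarith
  then have "(cmod (f x))\<^sup>2 \<le> 2 * (cmod (f y))\<^sup>2 + 2 * (integral {0..L} (\<lambda>t. norm (g t)))\<^sup>2"
    by (rule sq_le_2) simp
  then show ?thesis using cs by simp
qed

lemma pt_bound:
  assumes f: "has_wderiv L f g" and f2: "(\<lambda>x. (cmod (f x))\<^sup>2) integrable_on {0..L}"
    and L: "0 < L" and x: "x \<in> {0..L}"
  shows "(cmod (f x))\<^sup>2 \<le> 2 / L * integral {0..L} (\<lambda>t. (cmod (f t))\<^sup>2) + 2 * L * integral {0..L} (\<lambda>t. (cmod (g t))\<^sup>2)"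
proof -
  define G where "G = integral {0..L} (\<lambda>t. (cmod (g t))\<^sup>2)"
  define F where "F = integral {0..L} (\<lambda>t. (cmod (f t))\<^sup>2)"
  have "integral {0..L} (\<lambda>y. (cmod (f x))\<^sup>2) \<le> integral {0..L} (\<lambda>y. 2 * (cmod (f y))\<^sup>2 + 2 * (L * G))"
  proof (rule integral_le)
    show "(\<lambda>y. 2 * (cmod (f y))\<^sup>2 + 2 * (L * G)) integrable_on {0..L}"
      using integrable_add[OF integrable_cmul[OF f2, of 2] integrable_const_ivl[of "2 * (L * G)" 0 L]] by simp
    show "(\<lambda>y. (cmod (f x))\<^sup>2) integrable_on {0..L}" by (rule integrable_const_ivl)
    fix y assume "y \<in> {0..L}"
    then show "(cmod (f x))\<^sup>2 \<le> 2 * (cmod (f y))\<^sup>2 + 2 * (L * G)"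
      unfolding G_def using pt_bound_y[OF f _ x] L by simp
  qed
  also have "\<dots> = 2 * F + L * (2 * (L * G))"
    using integral_add[OF integrable_cmul[OF f2, of 2] integrable_const_ivl[of "2 * (L * G)" 0 L]] L
    by (simp add: F_def)
  finally have "L * (cmod (f x))\<^sup>2 \<le> 2 * F + L * (2 * (L * G))" using L by simp
  then have "(cmod (f x))\<^sup>2 \<le> (2 * F + L * (2 * (L * G))) / L" using L by (simp add: field_simps)
  also have "\<dots> = 2 / L * F + 2 * L * G" using L by (simp add: field_simps)
  finally show ?thesis unfolding F_def G_def .
qed

lemma cont_mult_int:
  fixes r :: "real \<Rightarrow> real"
  assumes r: "continuous_on {a..b} r" and f: "f integrable_on {a..b}" and f0: "\<And>x. x \<in> {a..b} \<Longrightarrow> 0 \<le> f x"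
  shows "(\<lambda>x. r x * f x) integrable_on {a..b}"
proof -
  have "f absolutely_integrable_on {a..b}" by (rule nonnegative_absolutely_integrable_1[OF f f0])
  moreover have "r \<in> borel_measurable (lebesgue_on {a..b})" by (rule continuous_imp_measurable_on_sets_lebesgue[OF r]) simp
  moreover have "bounded (r ` {a..b})" by (rule compact_imp_bounded[OF compact_continuous_image[OF r compact_Icc]])
  ultimately have "(\<lambda>x. r x * f x) absolutely_integrable_on {a..b}"
    by (intro absolutely_integrable_bounded_measurable_product_real) simp_all
  then show ?thesis using absolutely_integrable_on_def by blast
qed

lemma zc: "(x::complex) * z * cnj z = x * of_real ((cmod z)\<^sup>2)"
  by (metis complex_norm_square mult.assoc)

lemma wd2_prop: assumes "H2 L w" shows "has_wderiv L w (wd2 L w) \<and> H1 L (wd2 L w)"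
proof -
  from assms obtain g where "has_wderiv L w g \<and> H1 L g" unfolding H2_def by blast
  then show ?thesis unfolding wd2_def by (rule someI[of "\<lambda>g. has_wderiv L w g \<and> H1 L g"])
qed

lemma wd1_prop: assumes "has_wderiv L f g" shows "has_wderiv L f (wd1 L f)"
  using assms unfolding wd1_def by (rule someI[of "has_wderiv L f"])

lemma H1_wd1: "H1 L f \<Longrightarrow> has_wderiv L f (wd1 L f)"
  unfolding H1_def using wd1_prop by blast

lemma main_setup:
  fixes L P0 Pm M a1 a2 \<gamma> :: real and P :: "real \<Rightarrow> real" and p1 :: "real \<Rightarrow> complex" and N0 :: "real set"
  assumes L: "L > 0"
    and hP: "has_wderiv L (\<lambda>x. complex_of_real (P x)) p1"
    and N0: "negligible N0" "\<forall>x\<in>{0..L}-N0. cnj (p1 x) = p1 x"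
    and Hw: "H2 L w" and Hv: "H1 L v"
  defines "w1 \<equiv> wd2 L w" and "w2 \<equiv> wd1 L (wd2 L w)" and "v1 \<equiv> wd1 L v"
    and "A' \<equiv> (\<lambda>x. p1 x * wd2 L w x + complex_of_real (P x) * wd1 L (wd2 L w) x)"
  shows "ipH L P a1 a2 \<gamma> (w,v,\<xi>,\<psi>) (w,v,\<xi>,\<psi>) = complex_of_real (
       a1 * (\<gamma> * integral {0..L} (\<lambda>x. (cmod (A' x))\<^sup>2) + integral {0..L} (\<lambda>x. P x * (cmod (w1 x))\<^sup>2))
     + a1 * \<gamma> * P L * (cmod (w1 L))\<^sup>2 + a2 * (cmod (w 0))\<^sup>2
     + a1 * (\<gamma> * integral {0..L} (\<lambda>x. P x * (cmod (v1 x))\<^sup>2) + integral {0..L} (\<lambda>x. (cmod (v x))\<^sup>2))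
     + a1 * P L * (cmod \<xi>)\<^sup>2 + a2 * \<gamma> * (cmod \<psi>)\<^sup>2
     + 1/2 * (cmod (\<psi> - 2 * of_real a1 * of_real (P 0) * w1 0 + 2 * of_real a2 * w 0))\<^sup>2)"
proof -
  define Pc where "Pc = (\<lambda>x. complex_of_real (P x))"
  have hw: "has_wderiv L w w1" "H1 L w1" using wd2_prop[OF Hw] unfolding w1_def by auto
  have hw1: "has_wderiv L w1 w2" using H1_wd1[OF hw(2)] unfolding w2_def w1_def .
  have hv: "has_wderiv L v v1" using H1_wd1[OF Hv] unfolding v1_def .
  have v0sq: "(\<lambda>x. (cmod (v x))\<^sup>2) integrable_on {0..L}" using Hv unfolding H1_def by blast
  have w1sq: "(\<lambda>x. (cmod (w1 x))\<^sup>2) integrable_on {0..L}" by (rule hw_sq[OF hw(1)])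
  have v1sq: "(\<lambda>x. (cmod (v1 x))\<^sup>2) integrable_on {0..L}" by (rule hw_sq[OF hv])
  have hA': "has_wderiv L (\<lambda>x. Pc x * w1 x) A'"
    using hw_mult[OF hP hw1] unfolding Pc_def A'_def w1_def w2_def .
  have hB': "has_wderiv L (\<lambda>x. Pc x * cnj (w1 x)) (\<lambda>x. p1 x * cnj (w1 x) + Pc x * cnj (w2 x))"
    using hw_mult[OF hP hw_cnj[OF hw1]] unfolding Pc_def .
  define A where "A = wd1 L (\<lambda>y. complex_of_real (P y) * w1 y)"
  define B where "B = wd1 L (\<lambda>y. complex_of_real (P y) * cnj (w1 y))"
  have hA: "has_wderiv L (\<lambda>x. Pc x * w1 x) A" using wd1_prop[OF hA'] unfolding A_def Pc_def .
  have hB: "has_wderiv L (\<lambda>x. Pc x * cnj (w1 x)) B" using wd1_prop[OF hB'] unfolding B_def Pc_def .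
  obtain NA where NA: "negligible NA" "\<forall>x\<in>{0..L}-NA. A x = A' x" using hw_unique[OF hA hA'] by blast
  obtain NB where NB: "negligible NB" "\<forall>x\<in>{0..L}-NB. B x = p1 x * cnj (w1 x) + Pc x * cnj (w2 x)"
    using hw_unique[OF hB hB'] by blast
  have AB: "A x * B x = of_real ((cmod (A' x))\<^sup>2)" if x: "x \<in> {0..L} - (N0 \<union> NA \<union> NB)" for x
  proof -
    have "A x = A' x" using NA x by blast
    moreover have "B x = p1 x * cnj (w1 x) + Pc x * cnj (w2 x)" using NB x by blast
    moreover have "cnj (p1 x) = p1 x" using N0 x by blast
    ultimately have "B x = cnj (A' x)" by (simp add: A'_def Pc_def w1_def w2_def)
    then show ?thesis using \<open>A x = A' x\<close> by (metis complex_norm_square)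
  qed
  have cP: "continuous_on {0..L} P"
  proof -
    have "continuous_on {0..L} (\<lambda>x. Re (complex_of_real (P x)))"
      by (rule continuous_on_Re[OF hw_cont[OF hP]])
    then show ?thesis by simp
  qed
  have A'sq: "(\<lambda>x. (cmod (A' x))\<^sup>2) integrable_on {0..L}" by (rule hw_sq[OF hA'])
  have Pw1: "(\<lambda>x. P x * (cmod (w1 x))\<^sup>2) integrable_on {0..L}" by (rule cont_mult_int[OF cP w1sq]) simp
  have Pv1: "(\<lambda>x. P x * (cmod (v1 x))\<^sup>2) integrable_on {0..L}" by (rule cont_mult_int[OF cP v1sq]) simp
  have I1: "integral {0..L} (\<lambda>x. of_real \<gamma> * A x * B x + of_real (P x) * w1 x * cnj (w1 x))
      = of_real (\<gamma> * integral {0..L} (\<lambda>x. (cmod (A' x))\<^sup>2) + integral {0..L} (\<lambda>x. P x * (cmod (w1 x))\<^sup>2))"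
  proof -
    have "integral {0..L} (\<lambda>x. of_real \<gamma> * A x * B x + of_real (P x) * w1 x * cnj (w1 x))
        = integral {0..L} (\<lambda>x. of_real (\<gamma> * (cmod (A' x))\<^sup>2 + P x * (cmod (w1 x))\<^sup>2))"
    proof (rule integral_spike[of "N0 \<union> NA \<union> NB"])
      show "negligible (N0 \<union> NA \<union> NB)" using N0(1) NA(1) NB(1) by (simp add: negligible_Un)
      fix x assume x: "x \<in> {0..L} - (N0 \<union> NA \<union> NB)"
      have e1: "of_real \<gamma> * A x * B x = complex_of_real (\<gamma> * (cmod (A' x))\<^sup>2)"
        using AB[OF x] by (metis mult.assoc of_real_mult)
      have e2: "of_real (P x) * w1 x * cnj (w1 x) = complex_of_real (P x * (cmod (w1 x))\<^sup>2)"
        by (metis mult.assoc of_real_mult complex_norm_square)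
      show "complex_of_real (\<gamma> * (cmod (A' x))\<^sup>2 + P x * (cmod (w1 x))\<^sup>2) = of_real \<gamma> * A x * B x + of_real (P x) * w1 x * cnj (w1 x)"
        unfolding e1 e2 of_real_add ..
    qed
    also have "\<dots> = of_real (integral {0..L} (\<lambda>x. \<gamma> * (cmod (A' x))\<^sup>2 + P x * (cmod (w1 x))\<^sup>2))"
      by (rule integral_unique[OF has_integral_of_real[OF integrable_integral]])
         (rule integrable_add[OF _ Pw1], use integrable_cmul[OF A'sq, of \<gamma>] in simp)
    also have "integral {0..L} (\<lambda>x. \<gamma> * (cmod (A' x))\<^sup>2 + P x * (cmod (w1 x))\<^sup>2)
       = \<gamma> * integral {0..L} (\<lambda>x. (cmod (A' x))\<^sup>2) + integral {0..L} (\<lambda>x. P x * (cmod (w1 x))\<^sup>2)"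
      using integral_add[OF integrable_cmul[OF A'sq, of \<gamma>] Pw1] by simp
    finally show ?thesis .
  qed
  have I2: "integral {0..L} (\<lambda>x. of_real \<gamma> * of_real (P x) * v1 x * cnj (v1 x) + v x * cnj (v x))
      = of_real (\<gamma> * integral {0..L} (\<lambda>x. P x * (cmod (v1 x))\<^sup>2) + integral {0..L} (\<lambda>x. (cmod (v x))\<^sup>2))"
  proof -
    have "integral {0..L} (\<lambda>x. of_real \<gamma> * of_real (P x) * v1 x * cnj (v1 x) + v x * cnj (v x))
        = integral {0..L} (\<lambda>x. of_real (\<gamma> * (P x * (cmod (v1 x))\<^sup>2) + (cmod (v x))\<^sup>2))"
    proof (rule Henstock_Kurzweil_Integration.integral_cong)
      fix x
      have e1: "of_real \<gamma> * of_real (P x) * v1 x * cnj (v1 x) = complex_of_real (\<gamma> * (P x * (cmod (v1 x))\<^sup>2))"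
        by (metis mult.assoc of_real_mult complex_norm_square)
      have e2: "v x * cnj (v x) = complex_of_real ((cmod (v x))\<^sup>2)"
        by (metis complex_norm_square)
      show "of_real \<gamma> * of_real (P x) * v1 x * cnj (v1 x) + v x * cnj (v x) = complex_of_real (\<gamma> * (P x * (cmod (v1 x))\<^sup>2) + (cmod (v x))\<^sup>2)"
        unfolding e1 e2 of_real_add ..
    qed
    also have "\<dots> = of_real (integral {0..L} (\<lambda>x. \<gamma> * (P x * (cmod (v1 x))\<^sup>2) + (cmod (v x))\<^sup>2))"
      by (rule integral_unique[OF has_integral_of_real[OF integrable_integral]])
         (rule integrable_add[OF _ v0sq], use integrable_cmul[OF Pv1, of \<gamma>] in simp)
    also have "integral {0..L} (\<lambda>x. \<gamma> * (P x * (cmod (v1 x))\<^sup>2) + (cmod (v x))\<^sup>2)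
       = \<gamma> * integral {0..L} (\<lambda>x. P x * (cmod (v1 x))\<^sup>2) + integral {0..L} (\<lambda>x. (cmod (v x))\<^sup>2)"
      using integral_add[OF integrable_cmul[OF Pv1, of \<gamma>] v0sq] by simp
    finally show ?thesis .
  qed
  have cc: "cnj \<psi> - 2 * of_real a1 * of_real (P 0) * cnj (w1 0) + 2 * of_real a2 * cnj (w 0)
      = cnj (\<psi> - 2 * of_real a1 * of_real (P 0) * w1 0 + 2 * of_real a2 * w 0)" by simp
  show ?thesis
    unfolding ipH_def prod.case w1_def[symmetric] v1_def[symmetric] A_def[symmetric] B_def[symmetric]
    unfolding I1 I2 cc
    unfolding zc
    by (simp add: algebra_simps)
qed

lemma int_lin2:
  fixes f g :: "real \<Rightarrow> real"
  assumes "f integrable_on S" "g integrable_on S"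
  shows "(\<lambda>x. a * f x + b * g x) integrable_on S"
    and "integral S (\<lambda>x. a * f x + b * g x) = a * integral S f + b * integral S g"
proof -
  have i1: "(\<lambda>x. a * f x) integrable_on S" using integrable_cmul[OF assms(1), of a] by simp
  have i2: "(\<lambda>x. b * g x) integrable_on S" using integrable_cmul[OF assms(2), of b] by simp
  show "(\<lambda>x. a * f x + b * g x) integrable_on S" by (rule integrable_add[OF i1 i2])
  have "integral S (\<lambda>x. a * f x + b * g x) = integral S (\<lambda>x. a * f x) + integral S (\<lambda>x. b * g x)"
    by (rule integral_add[OF i1 i2])
  also have "\<dots> = a * integral S f + b * integral S g"
    using integral_cmul[where c=a and f=f and S=S] integral_cmul[where c=b and f=g and S=S] by simp
  finally show "integral S (\<lambda>x. a * f x + b * g x) = a * integral S f + b * integral S g" .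
qed

lemma int_cmul_real: "integral S (\<lambda>x. (c::real) * f x) = c * integral S f"
  using integral_cmul[where c=c and f=f and S=S] by simp

lemma sq_mult_le: "cmod a \<le> m \<Longrightarrow> (cmod (a * b))\<^sup>2 \<le> m\<^sup>2 * (cmod b)\<^sup>2"
proof -
  assume "cmod a \<le> m"
  then have "cmod a * cmod b \<le> m * cmod b" by (simp add: mult_right_mono)
  then have "(cmod a * cmod b)\<^sup>2 \<le> (m * cmod b)\<^sup>2" by (simp add: power_mono)
  then show ?thesis by (simp add: norm_mult power_mult_distrib)
qed

lemma sq_mult_ge: "m \<le> cmod a \<Longrightarrow> 0 \<le> m \<Longrightarrow> m\<^sup>2 * (cmod b)\<^sup>2 \<le> (cmod (a * b))\<^sup>2"
proof -
  assume "m \<le> cmod a" "0 \<le> m"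
  then have "m * cmod b \<le> cmod a * cmod b" by (simp add: mult_right_mono)
  then have "(m * cmod b)\<^sup>2 \<le> (cmod a * cmod b)\<^sup>2" using \<open>0 \<le> m\<close> by (simp add: power_mono)
  then show ?thesis by (simp add: norm_mult power_mult_distrib)
qed

lemma sc: "x \<le> k * S \<Longrightarrow> 0 \<le> (a::real) \<Longrightarrow> a * x \<le> (a * k) * S"
  by (metis mult.assoc mult_left_mono)

lemma dv: "c * X \<le> N \<Longrightarrow> 0 < (c::real) \<Longrightarrow> X \<le> (1 / c) * N"
  by (simp add: field_simps mult.commute)

lemma main_est:
  fixes L P0 Pm M a1 a2 \<gamma> :: real and P :: "real \<Rightarrow> real" and p1 :: "real \<Rightarrow> complex" and N0 :: "real set"
  assumes L: "L > 0"
    and hP: "has_wderiv L (\<lambda>x. complex_of_real (P x)) p1"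
    and P0: "P0 > 0" "\<forall>x\<in>{0..L}. P x \<ge> P0" and Pm: "\<forall>x\<in>{0..L}. P x \<le> Pm"
    and M: "M > 0" "\<forall>x\<in>{0..L}. cmod (p1 x) \<le> M"
    and N0: "negligible N0" "\<forall>x\<in>{0..L}-N0. cnj (p1 x) = p1 x"
    and a: "a1 > 0" "a2 > 0" "\<gamma> > 0"
    and Hw: "H2 L w" and Hv: "H1 L v"
  defines "E \<equiv> 2 / L + 2 * L"
  defines "KU \<equiv> a1 * (\<gamma> * (2 * M\<^sup>2 + 2 * Pm\<^sup>2) + Pm) + a1 * \<gamma> * Pm * E + a2 * E + a1 * (\<gamma> * Pm + 1)
      + a1 * Pm + a2 * \<gamma> + 2 + (8 * a1\<^sup>2 * Pm\<^sup>2 + 4 * a2\<^sup>2) * E"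
  defines "KL \<equiv> 2 * L * (1 / a2) + 2 * L\<^sup>2 * (1 / (a1 * P0)) + 1 / (a1 * P0)
      + (2 * (1 / (a1 * \<gamma>)) + 2 * M\<^sup>2 * (1 / (a1 * P0))) * (1 / P0\<^sup>2) + 1 / a1 + 1 / (a1 * \<gamma> * P0)
      + 1 / (a1 * P0) + 1 / (a2 * \<gamma>)"
  shows "0 \<le> Re (ipH L P a1 a2 \<gamma> (w,v,\<xi>,\<psi>) (w,v,\<xi>,\<psi>))
     \<and> Re (ipH L P a1 a2 \<gamma> (w,v,\<xi>,\<psi>) (w,v,\<xi>,\<psi>)) \<le> KU * (stnorm L (w,v,\<xi>,\<psi>))\<^sup>2
     \<and> (stnorm L (w,v,\<xi>,\<psi>))\<^sup>2 \<le> KL * Re (ipH L P a1 a2 \<gamma> (w,v,\<xi>,\<psi>) (w,v,\<xi>,\<psi>))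
     \<and> 0 \<le> stnorm L (w,v,\<xi>,\<psi>)"
proof -
  define w1 where "w1 = wd2 L w"
  define w2 where "w2 = wd1 L (wd2 L w)"
  define v1 where "v1 = wd1 L v"
  define Pc where "Pc = (\<lambda>x. complex_of_real (P x))"
  define A' where "A' = (\<lambda>x. p1 x * wd2 L w x + complex_of_real (P x) * wd1 L (wd2 L w) x)"
  have hw: "has_wderiv L w w1" "H1 L w1" using wd2_prop[OF Hw] unfolding w1_def by auto
  have hw1: "has_wderiv L w1 w2" using H1_wd1[OF hw(2)] unfolding w2_def w1_def .
  have hv: "has_wderiv L v v1" using H1_wd1[OF Hv] unfolding v1_def .
  have w0sq: "(\<lambda>x. (cmod (w x))\<^sup>2) integrable_on {0..L}" using Hw unfolding H2_def by blast
  have v0sq: "(\<lambda>x. (cmod (v x))\<^sup>2) integrable_on {0..L}" using Hv unfolding H1_def by blast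
  have w1sq: "(\<lambda>x. (cmod (w1 x))\<^sup>2) integrable_on {0..L}" by (rule hw_sq[OF hw(1)])
  have w2sq: "(\<lambda>x. (cmod (w2 x))\<^sup>2) integrable_on {0..L}" by (rule hw_sq[OF hw1])
  have v1sq: "(\<lambda>x. (cmod (v1 x))\<^sup>2) integrable_on {0..L}" by (rule hw_sq[OF hv])
  have hA': "has_wderiv L (\<lambda>x. Pc x * w1 x) A'"
    using hw_mult[OF hP hw1] unfolding Pc_def A'_def w1_def w2_def .
  have A'sq: "(\<lambda>x. (cmod (A' x))\<^sup>2) integrable_on {0..L}" by (rule hw_sq[OF hA'])
  have A'eq: "A' x = p1 x * w1 x + Pc x * w2 x" for x by (simp add: A'_def Pc_def w1_def w2_def)
  have cP: "continuous_on {0..L} P"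
  proof -
    have "continuous_on {0..L} (\<lambda>x. Re (complex_of_real (P x)))"
      by (rule continuous_on_Re[OF hw_cont[OF hP]])
    then show ?thesis by simp
  qed
  have Pw1: "(\<lambda>x. P x * (cmod (w1 x))\<^sup>2) integrable_on {0..L}" by (rule cont_mult_int[OF cP w1sq]) simp
  have Pv1: "(\<lambda>x. P x * (cmod (v1 x))\<^sup>2) integrable_on {0..L}" by (rule cont_mult_int[OF cP v1sq]) simp
  define W0 where "W0 = integral {0..L} (\<lambda>x. (cmod (w x))\<^sup>2)"
  define W1 where "W1 = integral {0..L} (\<lambda>x. (cmod (w1 x))\<^sup>2)"
  define W2 where "W2 = integral {0..L} (\<lambda>x. (cmod (w2 x))\<^sup>2)"
  define V0 where "V0 = integral {0..L} (\<lambda>x. (cmod (v x))\<^sup>2)"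
  define V1 where "V1 = integral {0..L} (\<lambda>x. (cmod (v1 x))\<^sup>2)"
  define IA where "IA = integral {0..L} (\<lambda>x. (cmod (A' x))\<^sup>2)"
  define IPw where "IPw = integral {0..L} (\<lambda>x. P x * (cmod (w1 x))\<^sup>2)"
  define IPv where "IPv = integral {0..L} (\<lambda>x. P x * (cmod (v1 x))\<^sup>2)"
  define c where "c = \<psi> - 2 * of_real a1 * of_real (P 0) * w1 0 + 2 * of_real a2 * w 0"
  define N where "N = a1 * (\<gamma> * IA + IPw) + a1 * \<gamma> * P L * (cmod (w1 L))\<^sup>2 + a2 * (cmod (w 0))\<^sup>2
     + a1 * (\<gamma> * IPv + V0) + a1 * P L * (cmod \<xi>)\<^sup>2 + a2 * \<gamma> * (cmod \<psi>)\<^sup>2 + 1/2 * (cmod c)\<^sup>2"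
  define S where "S = W0 + W1 + W2 + V0 + V1 + (cmod \<xi>)\<^sup>2 + (cmod \<psi>)\<^sup>2"
  have NE: "Re (ipH L P a1 a2 \<gamma> (w,v,\<xi>,\<psi>) (w,v,\<xi>,\<psi>)) = N"
    using main_setup[OF L hP N0 Hw Hv, of a1 a2 \<gamma> \<xi> \<psi>]
    unfolding N_def IA_def IPw_def IPv_def V0_def c_def w1_def v1_def A'_def by simp
  have W0n: "W0 \<ge> 0" unfolding W0_def by (rule integral_nonneg[OF w0sq]) simp
  have W1n: "W1 \<ge> 0" unfolding W1_def by (rule integral_nonneg[OF w1sq]) simp
  have W2n: "W2 \<ge> 0" unfolding W2_def by (rule integral_nonneg[OF w2sq]) simp
  have V0n: "V0 \<ge> 0" unfolding V0_def by (rule integral_nonneg[OF v0sq]) simp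
  have V1n: "V1 \<ge> 0" unfolding V1_def by (rule integral_nonneg[OF v1sq]) simp
  have IAn: "IA \<ge> 0" unfolding IA_def by (rule integral_nonneg[OF A'sq]) simp
  have SE: "(stnorm L (w,v,\<xi>,\<psi>))\<^sup>2 = S"
  proof -
    have h2: "H2norm2 L w = W0 + W1 + W2"
    proof -
      have "H2norm2 L w = integral {0..L} (\<lambda>x. (cmod (w x))\<^sup>2 + (cmod (w1 x))\<^sup>2 + (cmod (w2 x))\<^sup>2)"
        unfolding H2norm2_def w1_def w2_def ..
      also have "\<dots> = integral {0..L} (\<lambda>x. (cmod (w x))\<^sup>2 + (cmod (w1 x))\<^sup>2) + W2"
        unfolding W2_def by (rule integral_add[OF integrable_add[OF w0sq w1sq] w2sq])
      also have "integral {0..L} (\<lambda>x. (cmod (w x))\<^sup>2 + (cmod (w1 x))\<^sup>2) = W0 + W1"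
        unfolding W0_def W1_def by (rule integral_add[OF w0sq w1sq])
      finally show ?thesis .
    qed
    have h1: "H1norm2 L v = V0 + V1"
      unfolding H1norm2_def V0_def V1_def v1_def[symmetric] by (rule integral_add[OF v0sq v1sq])
    have "0 \<le> S" using W0n W1n W2n V0n V1n by (simp add: S_def)
    then show ?thesis unfolding stnorm_def prod.case h1 h2 S_def by simp
  qed
  have SN: "0 \<le> stnorm L (w,v,\<xi>,\<psi>)"
  proof -
    have "0 \<le> S" using W0n W1n W2n V0n V1n by (simp add: S_def)
    have "H2norm2 L w \<ge> 0" unfolding H2norm2_def
      by (rule integral_nonneg) (use integrable_add[OF integrable_add[OF w0sq w1sq] w2sq] in \<open>simp_all add: w1_def w2_def\<close>)
    moreover have "H1norm2 L v \<ge> 0" unfolding H1norm2_def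
      by (rule integral_nonneg) (use integrable_add[OF v0sq v1sq] in \<open>simp_all add: v1_def\<close>)
    ultimately show ?thesis unfolding stnorm_def prod.case by simp
  qed
  have PLb: "P0 \<le> P L" "P L \<le> Pm" "P0 \<le> P 0" "P 0 \<le> Pm" using P0 Pm L by auto
  have Pmn: "Pm > 0" using PLb P0 by linarith
  have Sge: "W0 \<le> S" "W1 \<le> S" "W2 \<le> S" "V0 \<le> S" "V1 \<le> S" "(cmod \<xi>)\<^sup>2 \<le> S" "(cmod \<psi>)\<^sup>2 \<le> S"
    using W0n W1n W2n V0n V1n unfolding S_def by (auto simp: add_nonneg_nonneg)
  have IPw_lo: "P0 * W1 \<le> IPw"
  proof -
    have "integral {0..L} (\<lambda>x. P0 * (cmod (w1 x))\<^sup>2) \<le> IPw" unfolding IPw_def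
      by (rule integral_le) (use integrable_cmul[OF w1sq, of P0] Pw1 P0 in \<open>auto intro: mult_right_mono\<close>)
    then show ?thesis unfolding W1_def int_cmul_real .
  qed
  have IPw_hi: "IPw \<le> Pm * W1"
  proof -
    have "IPw \<le> integral {0..L} (\<lambda>x. Pm * (cmod (w1 x))\<^sup>2)" unfolding IPw_def
      by (rule integral_le) (use integrable_cmul[OF w1sq, of Pm] Pw1 Pm in \<open>auto intro: mult_right_mono\<close>)
    then show ?thesis unfolding W1_def int_cmul_real .
  qed
  have IPv_lo: "P0 * V1 \<le> IPv"
  proof -
    have "integral {0..L} (\<lambda>x. P0 * (cmod (v1 x))\<^sup>2) \<le> IPv" unfolding IPv_def
      by (rule integral_le) (use integrable_cmul[OF v1sq, of P0] Pv1 P0 in \<open>auto intro: mult_right_mono\<close>)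
    then show ?thesis unfolding V1_def int_cmul_real .
  qed
  have IPv_hi: "IPv \<le> Pm * V1"
  proof -
    have "IPv \<le> integral {0..L} (\<lambda>x. Pm * (cmod (v1 x))\<^sup>2)" unfolding IPv_def
      by (rule integral_le) (use integrable_cmul[OF v1sq, of Pm] Pv1 Pm in \<open>auto intro: mult_right_mono\<close>)
    then show ?thesis unfolding V1_def int_cmul_real .
  qed
  have IA_hi: "IA \<le> 2 * M\<^sup>2 * W1 + 2 * Pm\<^sup>2 * W2"
  proof -
    have "IA \<le> integral {0..L} (\<lambda>x. (2 * M\<^sup>2) * (cmod (w1 x))\<^sup>2 + (2 * Pm\<^sup>2) * (cmod (w2 x))\<^sup>2)"
      unfolding IA_def
    proof (rule integral_le[OF A'sq int_lin2(1)[OF w1sq w2sq]])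
      fix x assume x: "x \<in> {0..L}"
      have "(cmod (A' x))\<^sup>2 \<le> 2 * (cmod (p1 x * w1 x))\<^sup>2 + 2 * (cmod (Pc x * w2 x))\<^sup>2"
        unfolding A'eq by (rule norm_sq_add)
      moreover have "(cmod (p1 x * w1 x))\<^sup>2 \<le> M\<^sup>2 * (cmod (w1 x))\<^sup>2" using M x by (intro sq_mult_le) auto
      moreover have "(cmod (Pc x * w2 x))\<^sup>2 \<le> Pm\<^sup>2 * (cmod (w2 x))\<^sup>2"
      proof (rule sq_mult_le)
        have "P0 \<le> P x" "P x \<le> Pm" using Pm P0 x by auto
        then show "cmod (Pc x) \<le> Pm" using P0 by (simp add: Pc_def)
      qed
      ultimately show "(cmod (A' x))\<^sup>2 \<le> (2 * M\<^sup>2) * (cmod (w1 x))\<^sup>2 + (2 * Pm\<^sup>2) * (cmod (w2 x))\<^sup>2" by simp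
    qed
    then show ?thesis unfolding int_lin2(2)[OF w1sq w2sq] W1_def W2_def by simp
  qed
  have W2_hi: "P0\<^sup>2 * W2 \<le> 2 * IA + 2 * M\<^sup>2 * W1"
  proof -
    have "integral {0..L} (\<lambda>x. P0\<^sup>2 * (cmod (w2 x))\<^sup>2) \<le> integral {0..L} (\<lambda>x. 2 * (cmod (A' x))\<^sup>2 + (2 * M\<^sup>2) * (cmod (w1 x))\<^sup>2)"
    proof (rule integral_le[OF _ int_lin2(1)[OF A'sq w1sq]])
      show "(\<lambda>x. P0\<^sup>2 * (cmod (w2 x))\<^sup>2) integrable_on {0..L}" using integrable_cmul[OF w2sq, of "P0\<^sup>2"] by simp
      fix x assume x: "x \<in> {0..L}"
      have "P0\<^sup>2 * (cmod (w2 x))\<^sup>2 \<le> (cmod (Pc x * w2 x))\<^sup>2"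
      proof (rule sq_mult_ge)
        have "P0 \<le> P x" using P0 x by auto
        then show "P0 \<le> cmod (Pc x)" using P0 by (simp add: Pc_def)
      qed (use P0 in simp)
      also have "Pc x * w2 x = A' x + (- (p1 x * w1 x))" unfolding A'eq by simp
      also have "(cmod (A' x + (- (p1 x * w1 x))))\<^sup>2 \<le> 2 * (cmod (A' x))\<^sup>2 + 2 * (cmod (- (p1 x * w1 x)))\<^sup>2"
        by (rule norm_sq_add)
      also have "(cmod (- (p1 x * w1 x)))\<^sup>2 \<le> M\<^sup>2 * (cmod (w1 x))\<^sup>2"
        unfolding norm_minus_cancel using M x by (intro sq_mult_le) auto
      finally show "P0\<^sup>2 * (cmod (w2 x))\<^sup>2 \<le> 2 * (cmod (A' x))\<^sup>2 + (2 * M\<^sup>2) * (cmod (w1 x))\<^sup>2" by simp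
    qed
    then show ?thesis unfolding int_lin2(2)[OF A'sq w1sq] int_cmul_real W2_def IA_def W1_def by simp
  qed
  have W0_hi: "W0 \<le> L * (2 * (cmod (w 0))\<^sup>2 + 2 * (L * W1))"
  proof -
    have "W0 \<le> integral {0..L} (\<lambda>x. 2 * (cmod (w 0))\<^sup>2 + 2 * (L * W1))"
      unfolding W0_def
      by (rule integral_le[OF w0sq integrable_const_ivl]) (use pt_bound_y[OF hw(1), of x 0 for x] L in \<open>auto simp: W1_def\<close>)
    then show ?thesis using L by simp
  qed
  have pw1L: "(cmod (w1 L))\<^sup>2 \<le> 2 / L * W1 + 2 * L * W2"
    unfolding W1_def W2_def by (rule pt_bound[OF hw1 w1sq L]) (use L in auto)
  have pw10: "(cmod (w1 0))\<^sup>2 \<le> 2 / L * W1 + 2 * L * W2"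
    unfolding W1_def W2_def by (rule pt_bound[OF hw1 w1sq L]) (use L in auto)
  have pw0: "(cmod (w 0))\<^sup>2 \<le> 2 / L * W0 + 2 * L * W1"
    unfolding W0_def W1_def by (rule pt_bound[OF hw(1) w0sq L]) (use L in auto)
  have c_hi: "(cmod c)\<^sup>2 \<le> 4 * (cmod \<psi>)\<^sup>2 + 16 * a1\<^sup>2 * Pm\<^sup>2 * (cmod (w1 0))\<^sup>2 + 8 * a2\<^sup>2 * (cmod (w 0))\<^sup>2"
  proof -
    have "c = (\<psi> + (- (2 * of_real a1 * of_real (P 0) * w1 0))) + 2 * of_real a2 * w 0" by (simp add: c_def)
    then have "(cmod c)\<^sup>2 \<le> 2 * (cmod (\<psi> + (- (2 * of_real a1 * of_real (P 0) * w1 0))))\<^sup>2 + 2 * (cmod (2 * of_real a2 * w 0))\<^sup>2"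
      using norm_sq_add by metis
    also have "(cmod (\<psi> + (- (2 * of_real a1 * of_real (P 0) * w1 0))))\<^sup>2 \<le> 2 * (cmod \<psi>)\<^sup>2 + 2 * (cmod (2 * of_real a1 * of_real (P 0) * w1 0))\<^sup>2"
      using norm_sq_add[of \<psi> "- (2 * of_real a1 * of_real (P 0) * w1 0)"] by simp
    also have "(cmod (2 * of_real a1 * of_real (P 0) * w1 0))\<^sup>2 \<le> (2 * a1 * Pm)\<^sup>2 * (cmod (w1 0))\<^sup>2"
    proof (rule sq_mult_le)
      show "cmod (2 * complex_of_real a1 * complex_of_real (P 0)) \<le> 2 * a1 * Pm"
        using PLb P0 a by (simp add: norm_mult)
    qed
    also have "(cmod (2 * of_real a2 * w 0))\<^sup>2 = (2 * a2)\<^sup>2 * (cmod (w 0))\<^sup>2"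
      using a by (simp add: norm_mult power_mult_distrib)
    finally show ?thesis by (simp add: power_mult_distrib algebra_simps)
  qed
  have Ln: "0 \<le> L" using L by simp
  have En: "E = 2 / L + 2 * L" by (simp add: E_def)
  have sq_n: "0 \<le> (cmod (w1 L))\<^sup>2" "0 \<le> (cmod (w 0))\<^sup>2" "0 \<le> (cmod \<xi>)\<^sup>2" "0 \<le> (cmod \<psi>)\<^sup>2" "0 \<le> (cmod c)\<^sup>2"
     "0 \<le> (cmod (w1 0))\<^sup>2" by simp_all
  have IPwn: "0 \<le> IPw" using IPw_lo W1n P0 by (meson mult_nonneg_nonneg less_imp_le order_trans)
  have IPvn: "0 \<le> IPv" using IPv_lo V1n P0 by (meson mult_nonneg_nonneg less_imp_le order_trans)
  have n1: "0 \<le> a1 * (\<gamma> * IA + IPw)" using a IAn IPwn by simp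
  have n2: "0 \<le> a1 * \<gamma> * P L * (cmod (w1 L))\<^sup>2" using a PLb P0 by simp
  have n3: "0 \<le> a2 * (cmod (w 0))\<^sup>2" using a by simp
  have n4: "0 \<le> a1 * (\<gamma> * IPv + V0)" using a IPvn V0n by simp
  have n5: "0 \<le> a1 * P L * (cmod \<xi>)\<^sup>2" using a PLb P0 by simp
  have n6: "0 \<le> a2 * \<gamma> * (cmod \<psi>)\<^sup>2" using a by simp
  have n7: "0 \<le> 1/2 * (cmod c)\<^sup>2" by simp
  have Nn: "0 \<le> N" unfolding N_def using n1 n2 n3 n4 n5 n6 n7 by linarith
  have ES1: "(cmod (w1 L))\<^sup>2 \<le> E * S"
  proof -
    have "2 / L * W1 \<le> 2 / L * S" using mult_left_mono[OF Sge(2), of "2/L"] L by simp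
    moreover have "2 * L * W2 \<le> 2 * L * S" using Sge(3) L by (simp add: mult_left_mono)
    ultimately show ?thesis using pw1L unfolding En by (simp add: algebra_simps)
  qed
  have ES2: "(cmod (w1 0))\<^sup>2 \<le> E * S"
  proof -
    have "2 / L * W1 \<le> 2 / L * S" using mult_left_mono[OF Sge(2), of "2/L"] L by simp
    moreover have "2 * L * W2 \<le> 2 * L * S" using Sge(3) L by (simp add: mult_left_mono)
    ultimately show ?thesis using pw10 unfolding En by (simp add: algebra_simps)
  qed
  have ES3: "(cmod (w 0))\<^sup>2 \<le> E * S"
  proof -
    have "2 / L * W0 \<le> 2 / L * S" using mult_left_mono[OF Sge(1), of "2/L"] L by simp
    moreover have "2 * L * W1 \<le> 2 * L * S" using Sge(2) L by (simp add: mult_left_mono)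
    ultimately show ?thesis using pw0 unfolding En by (simp add: algebra_simps)
  qed
  have u1: "a1 * (\<gamma> * IA + IPw) \<le> (a1 * (\<gamma> * (2 * M\<^sup>2 + 2 * Pm\<^sup>2) + Pm)) * S"
  proof (rule sc)
    have "2 * M\<^sup>2 * W1 \<le> 2 * M\<^sup>2 * S" using Sge(2) by (simp add: mult_left_mono)
    moreover have "2 * Pm\<^sup>2 * W2 \<le> 2 * Pm\<^sup>2 * S" using Sge(3) by (simp add: mult_left_mono)
    ultimately have "IA \<le> (2 * M\<^sup>2 + 2 * Pm\<^sup>2) * S" using IA_hi by (simp add: algebra_simps)
    then have "\<gamma> * IA \<le> \<gamma> * ((2 * M\<^sup>2 + 2 * Pm\<^sup>2) * S)" using a by (simp add: mult_left_mono)
    moreover have "IPw \<le> Pm * S"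
    proof -
      have "Pm * W1 \<le> Pm * S" using Sge(2) Pmn by (simp add: mult_left_mono)
      then show ?thesis using IPw_hi by linarith
    qed
    ultimately show "\<gamma> * IA + IPw \<le> (\<gamma> * (2 * M\<^sup>2 + 2 * Pm\<^sup>2) + Pm) * S" by (simp add: algebra_simps)
  qed (use a in simp)
  have u2: "a1 * \<gamma> * P L * (cmod (w1 L))\<^sup>2 \<le> (a1 * \<gamma> * Pm * E) * S"
  proof -
    have "P L * (cmod (w1 L))\<^sup>2 \<le> Pm * (E * S)" by (rule mult_mono[OF PLb(2) ES1]) (use Pmn in simp_all)
    then have "(a1 * \<gamma>) * (P L * (cmod (w1 L))\<^sup>2) \<le> (a1 * \<gamma>) * (Pm * (E * S))" using a by (simp add: mult_left_mono)
    then show ?thesis by (simp add: algebra_simps)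
  qed
  have u3: "a2 * (cmod (w 0))\<^sup>2 \<le> (a2 * E) * S" using sc[OF ES3, of a2] a by simp
  have u4: "a1 * (\<gamma> * IPv + V0) \<le> (a1 * (\<gamma> * Pm + 1)) * S"
  proof (rule sc)
    have "IPv \<le> Pm * S"
    proof -
      have "Pm * V1 \<le> Pm * S" using Sge(5) Pmn by (simp add: mult_left_mono)
      then show ?thesis using IPv_hi by linarith
    qed
    then have "\<gamma> * IPv \<le> \<gamma> * (Pm * S)" using a by (simp add: mult_left_mono)
    then show "\<gamma> * IPv + V0 \<le> (\<gamma> * Pm + 1) * S" using Sge(4) by (simp add: algebra_simps)
  qed (use a in simp)
  have u5: "a1 * P L * (cmod \<xi>)\<^sup>2 \<le> (a1 * Pm) * S"
  proof -
    have "P L * (cmod \<xi>)\<^sup>2 \<le> Pm * S" by (rule mult_mono[OF PLb(2) Sge(6)]) (use Pmn in simp_all)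
    then have "a1 * (P L * (cmod \<xi>)\<^sup>2) \<le> a1 * (Pm * S)" using a by (simp add: mult_left_mono)
    then show ?thesis by (simp add: algebra_simps)
  qed
  have u6: "a2 * \<gamma> * (cmod \<psi>)\<^sup>2 \<le> (a2 * \<gamma>) * S" using Sge(7) a by (simp add: mult_left_mono)
  have u7: "1/2 * (cmod c)\<^sup>2 \<le> (2 + (8 * a1\<^sup>2 * Pm\<^sup>2 + 4 * a2\<^sup>2) * E) * S"
  proof -
    have "16 * a1\<^sup>2 * Pm\<^sup>2 * (cmod (w1 0))\<^sup>2 \<le> 16 * a1\<^sup>2 * Pm\<^sup>2 * (E * S)" using ES2 by (simp add: mult_left_mono)
    moreover have "8 * a2\<^sup>2 * (cmod (w 0))\<^sup>2 \<le> 8 * a2\<^sup>2 * (E * S)" using ES3 by (simp add: mult_left_mono)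
    ultimately show ?thesis using c_hi Sge(7) by (simp add: algebra_simps)
  qed
  have KUe: "KU * S = (a1 * (\<gamma> * (2 * M\<^sup>2 + 2 * Pm\<^sup>2) + Pm)) * S + (a1 * \<gamma> * Pm * E) * S + (a2 * E) * S
      + (a1 * (\<gamma> * Pm + 1)) * S + (a1 * Pm) * S + (a2 * \<gamma>) * S + (2 + (8 * a1\<^sup>2 * Pm\<^sup>2 + 4 * a2\<^sup>2) * E) * S"
    unfolding KU_def by (simp add: algebra_simps)
  have upper: "N \<le> KU * S" unfolding KUe N_def using u1 u2 u3 u4 u5 u6 u7 by linarith
  have l1: "(a1 * \<gamma>) * IA \<le> N"
  proof -
    have "a1 * (\<gamma> * IA + IPw) = (a1 * \<gamma>) * IA + a1 * IPw" by (simp add: algebra_simps)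
    moreover have "0 \<le> a1 * IPw" using a IPwn by simp
    ultimately show ?thesis unfolding N_def using n2 n3 n4 n5 n6 n7 by linarith
  qed
  have l2: "(a1 * P0) * W1 \<le> N"
  proof -
    have "a1 * (\<gamma> * IA + IPw) = a1 * \<gamma> * IA + a1 * IPw" by (simp add: algebra_simps)
    moreover have "0 \<le> a1 * \<gamma> * IA" using a IAn by simp
    moreover have "a1 * (P0 * W1) \<le> a1 * IPw" using IPw_lo a by (simp add: mult_left_mono)
    moreover have "(a1 * P0) * W1 = a1 * (P0 * W1)" by (simp add: mult.assoc)
    ultimately show ?thesis unfolding N_def using n2 n3 n4 n5 n6 n7 by linarith
  qed
  have l3: "a2 * (cmod (w 0))\<^sup>2 \<le> N" unfolding N_def using n1 n2 n4 n5 n6 n7 by linarith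
  have l4: "(a1 * \<gamma> * P0) * V1 \<le> N"
  proof -
    have "a1 * (\<gamma> * IPv + V0) = a1 * \<gamma> * IPv + a1 * V0" by (simp add: algebra_simps)
    moreover have "0 \<le> a1 * V0" using a V0n by simp
    moreover have "(a1 * \<gamma>) * (P0 * V1) \<le> (a1 * \<gamma>) * IPv" using IPv_lo a by (simp add: mult_left_mono)
    moreover have "(a1 * \<gamma> * P0) * V1 = (a1 * \<gamma>) * (P0 * V1)" "a1 * \<gamma> * IPv = (a1 * \<gamma>) * IPv" by (simp_all add: mult.assoc)
    ultimately show ?thesis unfolding N_def using n1 n2 n3 n5 n6 n7 by linarith
  qed
  have l5: "a1 * V0 \<le> N"
  proof -
    have "a1 * (\<gamma> * IPv + V0) = a1 * \<gamma> * IPv + a1 * V0" by (simp add: algebra_simps)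
    moreover have "0 \<le> a1 * \<gamma> * IPv" using a IPvn by simp
    ultimately show ?thesis unfolding N_def using n1 n2 n3 n5 n6 n7 by linarith
  qed
  have l6: "(a1 * P0) * (cmod \<xi>)\<^sup>2 \<le> N"
  proof -
    have "(a1 * (cmod \<xi>)\<^sup>2) * P0 \<le> (a1 * (cmod \<xi>)\<^sup>2) * P L" using PLb a by (simp add: mult_left_mono)
    then have "(a1 * P0) * (cmod \<xi>)\<^sup>2 \<le> a1 * P L * (cmod \<xi>)\<^sup>2" by (simp add: algebra_simps)
    then show ?thesis unfolding N_def using n1 n2 n3 n4 n6 n7 by linarith
  qed
  have l7: "(a2 * \<gamma>) * (cmod \<psi>)\<^sup>2 \<le> N" unfolding N_def using n1 n2 n3 n4 n5 n7 by linarith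
  have pa: "0 < a1 * \<gamma>" "0 < a1 * P0" "0 < a1 * \<gamma> * P0" "0 < a2 * \<gamma>" using a P0 by simp_all
  note d1 = dv[OF l1 pa(1)] and d2 = dv[OF l2 pa(2)] and d3 = dv[OF l3 a(2)] and d4 = dv[OF l4 pa(3)]
    and d5 = dv[OF l5 a(1)] and d6 = dv[OF l6 pa(2)] and d7 = dv[OF l7 pa(4)]
  have bW0: "W0 \<le> 2 * L * ((1 / a2) * N) + 2 * L\<^sup>2 * ((1 / (a1 * P0)) * N)"
  proof -
    have "L * W1 \<le> L * ((1 / (a1 * P0)) * N)" by (rule mult_left_mono[OF d2 Ln])
    then have "2 * (cmod (w 0))\<^sup>2 + 2 * (L * W1) \<le> 2 * ((1 / a2) * N) + 2 * (L * ((1 / (a1 * P0)) * N))"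
      using d3 by linarith
    then have "L * (2 * (cmod (w 0))\<^sup>2 + 2 * (L * W1)) \<le> L * (2 * ((1 / a2) * N) + 2 * (L * ((1 / (a1 * P0)) * N)))"
      by (rule mult_left_mono[OF _ Ln])
    moreover have "L * (2 * ((1 / a2) * N) + 2 * (L * ((1 / (a1 * P0)) * N))) = 2 * L * ((1 / a2) * N) + 2 * L\<^sup>2 * ((1 / (a1 * P0)) * N)"
      by (simp add: algebra_simps power2_eq_square)
    ultimately show ?thesis using W0_hi by linarith
  qed
  have bW2: "W2 \<le> (1 / P0\<^sup>2) * (2 * ((1 / (a1 * \<gamma>)) * N) + 2 * M\<^sup>2 * ((1 / (a1 * P0)) * N))"
  proof (rule dv)
    have "2 * M\<^sup>2 * W1 \<le> 2 * M\<^sup>2 * ((1 / (a1 * P0)) * N)" by (rule mult_left_mono[OF d2]) simp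
    then show "P0\<^sup>2 * W2 \<le> 2 * ((1 / (a1 * \<gamma>)) * N) + 2 * M\<^sup>2 * ((1 / (a1 * P0)) * N)" using W2_hi d1 by linarith
  qed (use P0 in simp)
  have KLe: "KL * N = 2 * L * ((1 / a2) * N) + 2 * L\<^sup>2 * ((1 / (a1 * P0)) * N) + (1 / (a1 * P0)) * N
      + (1 / P0\<^sup>2) * (2 * ((1 / (a1 * \<gamma>)) * N) + 2 * M\<^sup>2 * ((1 / (a1 * P0)) * N)) + (1 / a1) * N
      + (1 / (a1 * \<gamma> * P0)) * N + (1 / (a1 * P0)) * N + (1 / (a2 * \<gamma>)) * N"
    unfolding KL_def by (simp add: algebra_simps)
  have lower: "S \<le> KL * N" unfolding KLe S_def using bW0 d2 bW2 d5 d4 d6 d7 by linarith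
  show ?thesis using NE SE SN Nn upper lower by simp

qed

theorem lemma2p1:
  fixes L P0 a1 a2 \<gamma> :: real and P :: "real \<Rightarrow> real"
  assumes "L > 0"
    and "H2 L (\<lambda>x. complex_of_real (P x))"
    and "P0 > 0" and "\<forall>x\<in>{0..L}. P x \<ge> P0"
    and "a1 > 0" and "a2 > 0" and "\<gamma> > 0"
  shows "\<exists>c1>0. \<exists>c2>0. \<forall>z\<in>Hsp L.
           c1 * stnorm L z \<le> normH L P a1 a2 \<gamma> z \<and> normH L P a1 a2 \<gamma> z \<le> c2 * stnorm L z"
proof -
  note L = assms(1) and P0 = assms(3,4) and a = assms(5,6,7)
  obtain p1 where hP: "has_wderiv L (\<lambda>x. complex_of_real (P x)) p1" and hp1: "H1 L p1"
    using assms(2) unfolding H2_def by blast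
  obtain q where "has_wderiv L p1 q" using hp1 unfolding H1_def by blast
  then have cp1: "continuous_on {0..L} p1" by (rule hw_cont)
  obtain M where M: "M > 0" "\<And>x. x \<in> {0..L} \<Longrightarrow> norm (p1 x) \<le> M" using bounded_cont[OF cp1] by blast
  obtain Pm where Pm0: "Pm > 0" "\<And>x. x \<in> {0..L} \<Longrightarrow> norm (complex_of_real (P x)) \<le> Pm"
    using bounded_cont[OF hw_cont[OF hP]] by blast
  have Pm: "\<forall>x\<in>{0..L}. P x \<le> Pm"
  proof
    fix x assume "x \<in> {0..L}"
    then have "norm (complex_of_real (P x)) \<le> Pm" by (rule Pm0(2))
    then show "P x \<le> Pm" by simp
  qed
  have "has_wderiv L (\<lambda>x. cnj (complex_of_real (P x))) (\<lambda>x. cnj (p1 x))" by (rule hw_cnj[OF hP])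
  then have hP': "has_wderiv L (\<lambda>x. complex_of_real (P x)) (\<lambda>x. cnj (p1 x))" by simp
  obtain N0 where N0: "negligible N0" "\<forall>x\<in>{0..L}-N0. p1 x = cnj (p1 x)" using hw_unique[OF hP hP'] by blast
  have N0': "\<forall>x\<in>{0..L}-N0. cnj (p1 x) = p1 x" using N0(2) by simp
  define E where "E = 2 / L + 2 * L"
  define KU where "KU = a1 * (\<gamma> * (2 * M\<^sup>2 + 2 * Pm\<^sup>2) + Pm) + a1 * \<gamma> * Pm * E + a2 * E + a1 * (\<gamma> * Pm + 1)
      + a1 * Pm + a2 * \<gamma> + 2 + (8 * a1\<^sup>2 * Pm\<^sup>2 + 4 * a2\<^sup>2) * E"
  define KL where "KL = 2 * L * (1 / a2) + 2 * L\<^sup>2 * (1 / (a1 * P0)) + 1 / (a1 * P0)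
      + (2 * (1 / (a1 * \<gamma>)) + 2 * M\<^sup>2 * (1 / (a1 * P0))) * (1 / P0\<^sup>2) + 1 / a1 + 1 / (a1 * \<gamma> * P0)
      + 1 / (a1 * P0) + 1 / (a2 * \<gamma>)"
  have En: "E > 0" unfolding E_def using L by (intro add_pos_pos) simp_all
  have KUp: "KU > 0" unfolding KU_def
    apply (rule add_pos_nonneg, rule add_nonneg_pos)
    using a M(1) Pm0(1) En by (auto intro!: add_nonneg_nonneg mult_nonneg_nonneg)
  have KLp: "KL > 0" unfolding KL_def using a P0(1) L M(1)
    by (intro add_pos_pos mult_pos_pos divide_pos_pos) auto
  have est: "0 \<le> Re (ipH L P a1 a2 \<gamma> z z) \<and> Re (ipH L P a1 a2 \<gamma> z z) \<le> KU * (stnorm L z)\<^sup>2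
       \<and> (stnorm L z)\<^sup>2 \<le> KL * Re (ipH L P a1 a2 \<gamma> z z) \<and> 0 \<le> stnorm L z" if z: "z \<in> Hsp L" for z
  proof -
    obtain w v \<xi> \<psi> where zz: "z = (w, v, \<xi>, \<psi>)" by (cases z) auto
    have Hw: "H2 L w" and Hv: "H1 L v" using z unfolding zz Hsp_def by auto
    have M2: "\<forall>x\<in>{0..L}. cmod (p1 x) \<le> M" using M(2) by auto
    note me = main_est[OF L hP P0 Pm M(1) M2 N0(1) N0' a Hw Hv, of \<xi> \<psi>]
    show ?thesis unfolding zz KU_def KL_def E_def using me by simp
  qed
  have p: "1 / sqrt KL > 0" "sqrt KU > 0" using KLp KUp by auto
  have main: "1 / sqrt KL * stnorm L z \<le> normH L P a1 a2 \<gamma> z \<and> normH L P a1 a2 \<gamma> z \<le> sqrt KU * stnorm L z"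
    if z: "z \<in> Hsp L" for z
  proof -
    define R where "R = Re (ipH L P a1 a2 \<gamma> z z)"
    define s where "s = stnorm L z"
    have e: "0 \<le> R" "R \<le> KU * s\<^sup>2" "s\<^sup>2 \<le> KL * R" using est[OF z] unfolding R_def s_def by auto
    have s0: "0 \<le> s" using est[OF z] unfolding s_def by auto
    have nH: "normH L P a1 a2 \<gamma> z = sqrt R" unfolding normH_def R_def ..
    have "sqrt R \<le> sqrt (KU * s\<^sup>2)" using e(2) by (rule real_sqrt_le_mono)
    also have "\<dots> = sqrt KU * s" using s0 KUp by (simp add: real_sqrt_mult)
    finally have h2: "normH L P a1 a2 \<gamma> z \<le> sqrt KU * stnorm L z" unfolding nH s_def .
    have "s = sqrt (s\<^sup>2)" using s0 by simp
    also have "\<dots> \<le> sqrt (KL * R)" using e(3) by (rule real_sqrt_le_mono)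
    also have "\<dots> = sqrt KL * sqrt R" by (simp add: real_sqrt_mult)
    finally have "s \<le> sqrt KL * sqrt R" .
    then have "s / sqrt KL \<le> sqrt R" using KLp by (simp add: field_simps)
    then have h1: "1 / sqrt KL * stnorm L z \<le> normH L P a1 a2 \<gamma> z" unfolding nH s_def by simp
    show ?thesis using h1 h2 by blast
  qed
  show ?thesis using main p by blast
qed

end
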